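(* Let $M$ be a finite $\mathcal J$-above semigroup. Define $H:\mathrm{Rh}(M^I)\times\mathrm{Rh}(M^I)\to\overline{\mathbb N}$ by $H(\sigma,\sigma)=2\sup h_{\mathcal J}+2$ (equal to $\omega$ if $h_{\mathcal J}$ is unbounded), $H(\sigma,\tau)=2h_{\mathcal J}(\sigma\wedge_{\mathcal L}\tau)+1$ if $\sigma\neq\tau$ and $(\sigma,\tau)\in V(M^I)$, and $H(\sigma,\tau)=2h_{\mathcal J}(\sigma\wedge_{\mathcal L}\tau)$ otherwise. Then $H$ is a strict length function for $\mathrm{Rh}(M^I)$. Consequently, if $M$ is a $Y$-semigroup, the restriction $H_Y$ of $H$ to $\mathrm{Rh}_Y(M^I)\times\mathrm{Rh}_Y(M^I)$ is a strict length function for $\mathrm{Rh}_Y(M^I)$, and $H_Y=D_\chi$ for some strongly faithful elliptic $\mathrm{Rh}_Y(M^I)$-tree $\chi$, unique up to isomorphism.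
   Context: $M^I$: $M$ with new identity $I$. Finite $\mathcal J$-above: $\{y:y\ge_{\mathcal J}x\}$ finite for all $x$. $h_{\mathcal J}$ is the $\mathcal J$-height function of $M^I$: $h_{\mathcal J}(m)$ is the largest $k$ such that there is a chain $m=m_0<_{\mathcal J}m_1<_{\mathcal J}\cdots<_{\mathcal J}m_k$ in $M^I$ (so $h_{\mathcal J}(I)=0$). $\mathrm{Rh}(M^I)$ is the Rhodes expansion (finite chains $(m_k<_{\mathcal L}\cdots<_{\mathcal L}m_0=I)$, product $\sigma\tau=\mathrm{lm}(m_kn\le_{\mathcal L}\cdots\le_{\mathcal L}m_1n\le_{\mathcal L}\tau)$ with $n$ the leftmost term of $\tau$, $\mathrm{lm}$ keeping the leftmost term of each $\mathcal L$-block). A $Y$-semigroup is a semigroup $M$ with a surjective morphism $Y^+\to M$; $\mathrm{Rh}_Y(M^I)$ is the submonoid of $\mathrm{Rh}(M^I)$ generated by the chains $(y<_{\mathcal L}I)$, $y\in Y$. $\sigma\wedge_{\mathcal L}\tau=m_r$, $r$ maximal with $m_j=m'_j$ ($j<r$) and $m_r\,\mathcal L\,m'_r$. $V(M^I)$: pairs $(\sigma,\tau)$ such that for all $\rho$, $(\rho\sigma\wedge_{\mathcal L}\rho\tau)\,\mathcal L\,(\sigma\wedge_{\mathcal L}\tau)$ implies $(\rho\sigma\wedge_{\mathcal L}\rho\tau)\,\mathcal R\,(\rho\tau\wedge_{\mathcal L}\rho\sigma)$. Length function: $D:S\times S\to\mathbb N\cup\{\omega\}$ with symmetry, $D(m',m'')\le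 D(m,m)$, $D(m',m'')\le D(m'm,m''m)$, $D(m,m'')\ge\min\{D(m,m'),D(m',m'')\}$; strict if $D(m',m'')=D(m,m)\Rightarrow m'=m''$. Elliptic $S$-tree $\chi=(r_0,T,\alpha,\theta)$: uniform rooted tree, maximal ray $\alpha$, elliptic (depth-preserving, distance-non-increasing) action with $\mathrm{Vert}(T)=\bigcup_i\alpha_iS$; strongly faithful if $\alpha s=\alpha s'\Rightarrow s=s'$; $D_\chi(s,s')=|\alpha s\wedge\alpha s'|$. *)

theory Defs
  imports Main "HOL-Library.Extended_Nat"
begin

section \<open>The monoid M^I (M a semigroup given by a type, I = None)\<close>

fun mI :: "'a::semigroup_mult option \<Rightarrow> 'a option \<Rightarrow> 'a option" where
  "mI None y = y"
| "mI (Some x) None = Some x"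
| "mI (Some x) (Some y) = Some (x * y)"

definition leR :: "'a::semigroup_mult option \<Rightarrow> 'a option \<Rightarrow> bool" where
  "leR x y \<longleftrightarrow> (\<exists>u. x = mI y u)"
definition leL :: "'a::semigroup_mult option \<Rightarrow> 'a option \<Rightarrow> bool" where
  "leL x y \<longleftrightarrow> (\<exists>u. x = mI u y)"
definition leJ :: "'a::semigroup_mult option \<Rightarrow> 'a option \<Rightarrow> bool" where
  "leJ x y \<longleftrightarrow> (\<exists>u v. x = mI (mI u y) v)"
definition eqR :: "'a::semigroup_mult option \<Rightarrow> 'a option \<Rightarrow> bool" where
  "eqR x y \<longleftrightarrow> leR x y \<and> leR y x"
definition eqL :: "'a::semigroup_mult option \<Rightarrow> 'a option \<Rightarrow> bool" where
  "eqL x y \<longleftrightarrow> leL x y \<and> leL y x"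
definition ltL :: "'a::semigroup_mult option \<Rightarrow> 'a option \<Rightarrow> bool" where
  "ltL x y \<longleftrightarrow> leL x y \<and> \<not> leL y x"
definition ltJ :: "'a::semigroup_mult option \<Rightarrow> 'a option \<Rightarrow> bool" where
  "ltJ x y \<longleftrightarrow> leJ x y \<and> \<not> leJ y x"

definition J_above_finite :: "'a::semigroup_mult itself \<Rightarrow> bool" where
  "J_above_finite _ \<longleftrightarrow> (\<forall>x::'a. finite {y::'a. leJ (Some x) (Some y)})"

definition hJ :: "'a::semigroup_mult option \<Rightarrow> nat" where
  "hJ m = (GREATEST k. \<exists>c::nat \<Rightarrow> 'a option. c 0 = m \<and> (\<forall>i<k. ltJ (c i) (c (Suc i))))"

text \<open>A chain (m_k <_L ... <_L m_1 <_L m_0 = I) is the list [m_k, ..., m_1, m_0];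
  its leftmost term is the head of the list.\<close>
definition rhodes :: "'a::semigroup_mult option list set" where
  "rhodes = {xs. xs \<noteq> [] \<and> last xs = None \<and> sorted_wrt ltL xs}"

fun lm :: "'a::semigroup_mult option list \<Rightarrow> 'a option list" where
  "lm [] = []"
| "lm [x] = [x]"
| "lm (x # y # zs) = (if eqL x y then lm (x # zs) else x # lm (y # zs))"

definition rh_mult :: "'a::semigroup_mult option list \<Rightarrow> 'a option list \<Rightarrow> 'a option list" where
  "rh_mult \<sigma> \<tau> = lm (map (\<lambda>m. mI m (hd \<tau>)) (butlast \<sigma>) @ \<tau>)"

text \<open>Y-semigroups: phi gives the images of the letters; the induced morphism Y^+ -> M.\<close>
fun evalY :: "('y \<Rightarrow> 'a::semigroup_mult) \<Rightarrow> 'y list \<Rightarrow> 'a" where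
  "evalY \<phi> [] = undefined"
| "evalY \<phi> [y] = \<phi> y"
| "evalY \<phi> (y # z # ys) = \<phi> y * evalY \<phi> (z # ys)"

definition Y_semigroup :: "('y \<Rightarrow> 'a::semigroup_mult) \<Rightarrow> bool" where
  "Y_semigroup \<phi> \<longleftrightarrow> (\<forall>m::'a. \<exists>w. w \<noteq> [] \<and> evalY \<phi> w = m)"

inductive_set RhY :: "('y \<Rightarrow> 'a::semigroup_mult) \<Rightarrow> 'a option list set" for \<phi> where
  unit: "[None] \<in> RhY \<phi>"
| gen: "[Some (\<phi> y), None] \<in> RhY \<phi>"
| mult: "\<sigma> \<in> RhY \<phi> \<Longrightarrow> \<tau> \<in> RhY \<phi> \<Longrightarrow> rh_mult \<sigma> \<tau> \<in> RhY \<phi>"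

text \<open>sigma \<and>_L tau = m_r (indices counted from m_0 = I, i.e. on the reversed list).\<close>
definition wedgeL :: "'a::semigroup_mult option list \<Rightarrow> 'a option list \<Rightarrow> 'a option" where
  "wedgeL \<sigma> \<tau> = rev \<sigma> ! (GREATEST r. r < length \<sigma> \<and> r < length \<tau> \<and>
      (\<forall>j<r. rev \<sigma> ! j = rev \<tau> ! j) \<and> eqL (rev \<sigma> ! r) (rev \<tau> ! r))"

definition inV :: "'a::semigroup_mult option list \<Rightarrow> 'a option list \<Rightarrow> bool" where
  "inV \<sigma> \<tau> \<longleftrightarrow> (\<forall>\<rho>\<in>rhodes.
      eqL (wedgeL (rh_mult \<rho> \<sigma>) (rh_mult \<rho> \<tau>)) (wedgeL \<sigma> \<tau>) \<longrightarrow>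
      eqR (wedgeL (rh_mult \<rho> \<sigma>) (rh_mult \<rho> \<tau>)) (wedgeL (rh_mult \<rho> \<tau>) (rh_mult \<rho> \<sigma>)))"

definition VMI :: "('a::semigroup_mult option list \<times> 'a option list) set" where
  "VMI = {(\<sigma>, \<tau>). \<sigma> \<in> rhodes \<and> \<tau> \<in> rhodes \<and> inV \<sigma> \<tau>}"

definition Hfun :: "'a::semigroup_mult option list \<Rightarrow> 'a option list \<Rightarrow> enat" where
  "Hfun \<sigma> \<tau> = (if \<sigma> = \<tau> then 2 * (SUP m::'a option. enat (hJ m)) + 2
     else if (\<sigma>, \<tau>) \<in> VMI then enat (2 * hJ (wedgeL \<sigma> \<tau>) + 1)
     else enat (2 * hJ (wedgeL \<sigma> \<tau>)))"

definition length_function :: "'s set \<Rightarrow> ('s \<Rightarrow> 's \<Rightarrow> 's) \<Rightarrow> ('s \<Rightarrow> 's \<Rightarrow> enat) \<Rightarrow> bool" where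
  "length_function S f D \<longleftrightarrow> (\<forall>m\<in>S. \<forall>m'\<in>S. \<forall>m''\<in>S.
      D m m' = D m' m \<and> D m' m'' \<le> D m m \<and> D m' m'' \<le> D (f m' m) (f m'' m) \<and>
      min (D m m') (D m' m'') \<le> D m m'')"

definition strict_length_function :: "'s set \<Rightarrow> ('s \<Rightarrow> 's \<Rightarrow> 's) \<Rightarrow> ('s \<Rightarrow> 's \<Rightarrow> enat) \<Rightarrow> bool" where
  "strict_length_function S f D \<longleftrightarrow> length_function S f D \<and>
     (\<forall>m\<in>S. \<forall>m'\<in>S. \<forall>m''\<in>S. D m' m'' = D m m \<longrightarrow> m' = m'')"

text \<open>A rooted tree is given by its vertex set, root and parent map (par is only meaningful
  off the root); the ray alpha is (alpha 0, ..., alpha l) with l \<in> nat \<union> {omega};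
  act is a right action of S.\<close>
record ('v, 's) stree =
  Vt :: "'v set"
  rt :: 'v
  par :: "'v \<Rightarrow> 'v"
  ray :: "nat \<Rightarrow> 'v"
  rlen :: enat
  act :: "'v \<Rightarrow> 's \<Rightarrow> 'v"

definition rooted_tree :: "('v, 's) stree \<Rightarrow> bool" where
  "rooted_tree T \<longleftrightarrow> rt T \<in> Vt T \<and> (\<forall>v\<in>Vt T. v \<noteq> rt T \<longrightarrow> par T v \<in> Vt T) \<and>
     (\<forall>v\<in>Vt T. \<exists>n. (par T ^^ n) v = rt T)"

definition depth :: "('v, 's) stree \<Rightarrow> 'v \<Rightarrow> nat" where
  "depth T v = (LEAST n. (par T ^^ n) v = rt T)"

definition tdist :: "('v, 's) stree \<Rightarrow> 'v \<Rightarrow> 'v \<Rightarrow> nat" where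
  "tdist T v w = (LEAST n. \<exists>k l. k + l = n \<and> k \<le> depth T v \<and> l \<le> depth T w \<and>
      (par T ^^ k) v = (par T ^^ l) w)"

definition is_ray :: "('v, 's) stree \<Rightarrow> (nat \<Rightarrow> 'v) \<Rightarrow> enat \<Rightarrow> bool" where
  "is_ray T \<beta> l \<longleftrightarrow> \<beta> 0 = rt T \<and> (\<forall>i. enat i \<le> l \<longrightarrow> \<beta> i \<in> Vt T) \<and>
     (\<forall>i. enat (Suc i) \<le> l \<longrightarrow> \<beta> (Suc i) \<noteq> rt T \<and> par T (\<beta> (Suc i)) = \<beta> i)"

definition is_max_ray :: "('v, 's) stree \<Rightarrow> (nat \<Rightarrow> 'v) \<Rightarrow> enat \<Rightarrow> bool" where
  "is_max_ray T \<beta> l \<longleftrightarrow> is_ray T \<beta> l \<and>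
     (\<forall>n. l = enat n \<longrightarrow> \<not> (\<exists>w\<in>Vt T. w \<noteq> rt T \<and> par T w = \<beta> n))"

definition uniform_tree :: "('v, 's) stree \<Rightarrow> bool" where
  "uniform_tree T \<longleftrightarrow> (\<forall>\<beta>1 l1 \<beta>2 l2. is_max_ray T \<beta>1 l1 \<and> is_max_ray T \<beta>2 l2 \<longrightarrow> l1 = l2)"

definition elliptic_action :: "'s set \<Rightarrow> ('s \<Rightarrow> 's \<Rightarrow> 's) \<Rightarrow> ('v, 's) stree \<Rightarrow> bool" where
  "elliptic_action S f T \<longleftrightarrow>
     (\<forall>v\<in>Vt T. \<forall>s\<in>S. act T v s \<in> Vt T \<and> depth T (act T v s) = depth T v) \<and>
     (\<forall>v\<in>Vt T. \<forall>w\<in>Vt T. \<forall>s\<in>S. tdist T (act T v s) (act T w s) \<le> tdist T v w) \<and>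
     (\<forall>v\<in>Vt T. \<forall>s\<in>S. \<forall>t\<in>S. act T (act T v s) t = act T v (f s t))"

definition elliptic_tree :: "'s set \<Rightarrow> ('s \<Rightarrow> 's \<Rightarrow> 's) \<Rightarrow> ('v, 's) stree \<Rightarrow> bool" where
  "elliptic_tree S f T \<longleftrightarrow> rooted_tree T \<and> uniform_tree T \<and> is_max_ray T (ray T) (rlen T) \<and>
     elliptic_action S f T \<and>
     Vt T = {act T (ray T i) s | i s. enat i \<le> rlen T \<and> s \<in> S}"

definition strongly_faithful :: "'s set \<Rightarrow> ('v, 's) stree \<Rightarrow> bool" where
  "strongly_faithful S T \<longleftrightarrow> (\<forall>s\<in>S. \<forall>s'\<in>S.
     (\<forall>i. enat i \<le> rlen T \<longrightarrow> act T (ray T i) s = act T (ray T i) s') \<longrightarrow> s = s')"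

text \<open>D_chi(s,s') = |alpha s \<and> alpha s'|, the length of the common initial segment.\<close>
definition Dchi :: "('v, 's) stree \<Rightarrow> 's \<Rightarrow> 's \<Rightarrow> enat" where
  "Dchi T s s' = Sup {enat i | i. enat i \<le> rlen T \<and> act T (ray T i) s = act T (ray T i) s'}"

definition stree_iso :: "'s set \<Rightarrow> ('v, 's) stree \<Rightarrow> ('w, 's) stree \<Rightarrow> bool" where
  "stree_iso S T1 T2 \<longleftrightarrow> (\<exists>g. bij_betw g (Vt T1) (Vt T2) \<and> g (rt T1) = rt T2 \<and>
     (\<forall>v\<in>Vt T1. v \<noteq> rt T1 \<longrightarrow> g (par T1 v) = par T2 (g v)) \<and>
     rlen T1 = rlen T2 \<and> (\<forall>i. enat i \<le> rlen T1 \<longrightarrow> g (ray T1 i) = ray T2 i) \<and>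
     (\<forall>v\<in>Vt T1. \<forall>s\<in>S. g (act T1 v s) = act T2 (g v) s))"

end

theory Submission
  imports Defs
begin


lemma mI_assoc: "mI (mI a b) c = mI a (mI b c)"
  by (cases a; cases b; cases c) (simp_all add: mult.assoc)
lemma mI_None_right[simp]: "mI a None = a" by (cases a) simp_all
lemma mI_None_iff: "mI a b = None \<longleftrightarrow> a = None \<and> b = None" by (cases a; cases b) auto

lemma leL_refl[simp]: "leL x x" unfolding leL_def by (metis mI.simps(1))
lemma leR_refl[simp]: "leR x x" unfolding leR_def by (metis mI_None_right)
lemma leJ_refl[simp]: "leJ x x" unfolding leJ_def by (metis mI.simps(1) mI_None_right)
lemma leL_trans: "leL x y \<Longrightarrow> leL y z \<Longrightarrow> leL x z" unfolding leL_def by (metis mI_assoc)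
lemma leR_trans: "leR x y \<Longrightarrow> leR y z \<Longrightarrow> leR x z" unfolding leR_def by (metis mI_assoc)
lemma leJ_trans: "leJ x y \<Longrightarrow> leJ y z \<Longrightarrow> leJ x z" unfolding leJ_def by (metis mI_assoc)
lemma leL_leJ: "leL x y \<Longrightarrow> leJ x y" unfolding leL_def leJ_def by (metis mI_None_right)
lemma leR_leJ: "leR x y \<Longrightarrow> leJ x y" unfolding leR_def leJ_def by (metis mI.simps(1))
lemma eqL_refl[simp]: "eqL x x" unfolding eqL_def by simp
lemma eqR_refl[simp]: "eqR x x" unfolding eqR_def by simp
lemma eqL_sym: "eqL x y \<Longrightarrow> eqL y x" unfolding eqL_def by simp
lemma eqR_sym: "eqR x y \<Longrightarrow> eqR y x" unfolding eqR_def by simp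
lemma eqL_trans: "eqL x y \<Longrightarrow> eqL y z \<Longrightarrow> eqL x z" unfolding eqL_def by (meson leL_trans)
lemma eqR_trans: "eqR x y \<Longrightarrow> eqR y z \<Longrightarrow> eqR x z" unfolding eqR_def by (meson leR_trans)
lemma eqL_commute: "eqL x y = eqL y x" using eqL_sym by blast
lemma leL_multr: "leL x y \<Longrightarrow> leL (mI x n) (mI y n)" unfolding leL_def by (metis mI_assoc)
lemma eqL_multr: "eqL x y \<Longrightarrow> eqL (mI x n) (mI y n)" unfolding eqL_def by (simp add: leL_multr)
lemma leL_self: "leL (mI u x) x" unfolding leL_def by blast
lemma leR_self: "leR (mI x u) x" unfolding leR_def by blast
lemma leJ_selfr: "leJ (mI x u) x" by (simp add: leR_leJ leR_self)
lemma leJ_selfl: "leJ (mI u x) x" by (simp add: leL_leJ leL_self)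
lemma leL_None: "leL None x \<Longrightarrow> x = None" unfolding leL_def by (metis mI_None_iff)
lemma leJ_None: "leJ None x \<Longrightarrow> x = None" unfolding leJ_def by (metis mI_None_iff)
lemma leJ_top: "leJ x None" unfolding leJ_def by (metis mI.simps(1) mI_None_right)
lemma leL_top: "leL x None" unfolding leL_def by (metis mI_None_right)
lemma eqL_None: "eqL x None \<longleftrightarrow> x = None" unfolding eqL_def using leL_None leL_top by blast

lemma funpow_comm:
  assumes "\<And>z. F (G z) = G (F z)"
  shows "G ((F ^^ k) z) = (F ^^ k) (G z)"
proof (induction k)
  case 0 then show ?case by simp
next
  case (Suc k)
  have "G ((F ^^ Suc k) z) = F (G ((F ^^ k) z))" by (simp add: assms)
  also have "\<dots> = (F ^^ Suc k) (G z)" using Suc by simp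
  finally show ?case .
qed

lemma funpow_comm2:
  assumes "\<And>z. F (G z) = G (F z)"
  shows "(F ^^ a) ((G ^^ b) z) = (G ^^ b) ((F ^^ a) z)"
proof (induction b)
  case 0 then show ?case by simp
next
  case (Suc b)
  have "(F ^^ a) ((G ^^ Suc b) z) = G ((F ^^ a) ((G ^^ b) z))"
    using funpow_comm[of F G a, OF assms] by simp
  then show ?case using Suc by simp
qed

lemma funpow_fix:
  assumes "F (G y) = y" "\<And>z. F (G z) = G (F z)"
  shows "(F ^^ k) ((G ^^ k) y) = y"
proof (induction k)
  case 0 then show ?case by simp
next
  case (Suc k)
  have "(F ^^ Suc k) ((G ^^ Suc k) y) = (F ^^ k) (F (G ((G ^^ k) y)))"
    by (simp add: funpow_swap1)
  also have "F (G ((G ^^ k) y)) = (G ^^ k) (F (G y))"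
  proof -
    have c: "\<And>z. F ((G ^^ k) z) = (G ^^ k) (F z)"
      using funpow_comm[of G F k] assms(2) by metis
    have "G ((G ^^ k) y) = (G ^^ k) (G y)" by (simp add: funpow_swap1)
    then show ?thesis using c by simp
  qed
  also have "\<dots> = (G ^^ k) y" using assms(1) by simp
  finally show ?case using Suc by simp
qed

lemma periodic_pow:
  assumes "finite A" "\<And>k. (F ^^ k) y \<in> A"
  shows "\<exists>t\<ge>1. (F ^^ t) ((F ^^ t) y) = (F ^^ t) y"
proof -
  have "finite (range (\<lambda>k. (F ^^ k) y))" using assms by (meson finite_subset image_subsetI)
  then have "\<not> inj (\<lambda>k. (F ^^ k) y)" using infinite_UNIV_nat finite_imageD by blast
  then obtain i j where ij: "i < j" "(F ^^ i) y = (F ^^ j) y"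
    unfolding inj_def by (metis linorder_neqE_nat)
  define d where "d = j - i"
  have d: "d > 0" "j = i + d" using ij d_def by auto
  have step: "(F ^^ (m + d)) y = (F ^^ m) y" if "m \<ge> i" for m
  proof -
    have e: "m + d = (m - i) + j" using that d by simp
    have "(F ^^ (m + d)) y = (F ^^ (m - i)) ((F ^^ j) y)"
      unfolding e funpow_add by simp
    also have "\<dots> = (F ^^ (m - i)) ((F ^^ i) y)" using ij by simp
    also have "\<dots> = (F ^^ m) y" using that
      by (metis funpow_add le_add_diff_inverse2 o_apply)
    finally show ?thesis .
  qed
  have per: "(F ^^ (m + c * d)) y = (F ^^ m) y" if "m \<ge> i" for m c
  proof (induction c)
    case 0 then show ?case by simp
  next
    case (Suc c)
    have "(F ^^ (m + Suc c * d)) y = (F ^^ ((m + c * d) + d)) y" by (simp add: algebra_simps)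
    also have "\<dots> = (F ^^ (m + c * d)) y" using step that by simp
    finally show ?case using Suc by simp
  qed
  define t where "t = (i + 1) * d"
  have "t \<ge> i + 1" using d t_def
    by (metis One_nat_def Suc_eq_plus1 add_gr_0 less_one mult_le_mono2 mult_not_zero nat_mult_1_right not_gr_zero not_less mult.commute)
  moreover have "(F ^^ t) ((F ^^ t) y) = (F ^^ t) y"
  proof -
    have "(F ^^ t) ((F ^^ t) y) = (F ^^ (t + (i+1) * d)) y"
      by (simp add: funpow_add t_def)
    also have "\<dots> = (F ^^ t) y" using per[of t "i+1"] \<open>t \<ge> i + 1\<close> by simp
    finally show ?thesis .
  qed
  ultimately show ?thesis by (intro exI[of _ t]) auto
qed

lemma stab_core:
  assumes comm: "\<And>z. F (G z) = G (F z)" and fx: "F (G y) = y"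
    and fin: "finite A" and mem: "\<And>k. (F ^^ k) y \<in> A"
  shows "\<exists>t\<ge>1. (F ^^ t) y = y"
proof -
  obtain t where t: "t \<ge> 1" "(F ^^ t) ((F ^^ t) y) = (F ^^ t) y"
    using periodic_pow[OF fin mem] by blast
  have y: "(F ^^ t) ((G ^^ t) y) = y" by (rule funpow_fix[of F G y, OF fx comm])
  have c: "\<And>z. (F ^^ t) ((G ^^ t) z) = (G ^^ t) ((F ^^ t) z)"
    by (rule funpow_comm2[of F G, OF comm])
  have "(F ^^ t) y = (F ^^ t) ((F ^^ t) ((G ^^ t) y))" using y by simp
  also have "\<dots> = (F ^^ t) ((G ^^ t) ((F ^^ t) y))" using c by simp
  also have "\<dots> = (G ^^ t) ((F ^^ t) ((F ^^ t) y))" using c by simp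
  also have "\<dots> = (G ^^ t) ((F ^^ t) y)" using t by simp
  also have "\<dots> = y" using y c by simp
  finally show ?thesis using t by blast
qed

lemma leL_pow: "leL (((\<lambda>z. mI c z) ^^ k) w) w"
  by (induction k) (auto intro: leL_trans leL_self)
lemma leR_pow: "leR (((\<lambda>z. mI z c) ^^ k) w) w"
  by (induction k) (auto intro: leR_trans leR_self)
lemma Some_pow: "((\<lambda>z. mI c z) ^^ k) (Some x) \<noteq> None"
  by (induction k) (auto simp: mI_None_iff)
lemma Some_powr: "((\<lambda>z. mI z c) ^^ k) (Some x) \<noteq> None"
  by (induction k) (auto simp: mI_None_iff)

definition Afin :: "'a::semigroup_mult \<Rightarrow> 'a option set" where
  "Afin x = insert None (Some ` {z. leJ (Some x) (Some z)})"

lemma Afin_finite: "J_above_finite TYPE('a::semigroup_mult) \<Longrightarrow> finite (Afin (x::'a))"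
  unfolding Afin_def J_above_finite_def by auto

lemma Afin_mem: "leJ (Some x) w \<Longrightarrow> w \<in> Afin x"
  unfolding Afin_def by (cases w) auto

lemma stab_L:
  assumes fin: "J_above_finite TYPE('a::semigroup_mult)"
    and J: "leJ y (mI u y)"
  shows "leL (y::'a option) (mI u y)"
proof (cases y)
  case None
  then have "u = None" using J leJ_None by (cases u) auto
  then show ?thesis using None by simp
next
  case (Some x)
  obtain a b where ab: "y = mI (mI a (mI u y)) b" using J unfolding leJ_def by blast
  define F where "F = (\<lambda>z. mI (mI a u) z)"
  define G where "G = (\<lambda>z. mI z b)"
  have comm: "\<And>z. F (G z) = G (F z)" unfolding F_def G_def by (simp add: mI_assoc)
  have fx: "F (G y) = y" using ab unfolding F_def G_def by (simp add: mI_assoc)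
  have mem: "(F ^^ k) y \<in> Afin x" for k
  proof -
    have "(F ^^ k) ((G ^^ k) y) = y" by (rule funpow_fix[of F G y, OF fx comm])
    moreover have "(F ^^ k) ((G ^^ k) y) = (G ^^ k) ((F ^^ k) y)"
      by (rule funpow_comm2[of F G, OF comm])
    ultimately have "leR y ((F ^^ k) y)" using leR_pow[where c=b and k=k and w="(F ^^ k) y"] unfolding G_def by simp
    then show ?thesis using Some by (intro Afin_mem) (simp add: leR_leJ)
  qed
  obtain t where t: "t \<ge> 1" "(F ^^ t) y = y"
    using stab_core[OF comm fx Afin_finite[OF fin] mem] by blast
  have "(F ^^ t) y = (F ^^ (t - 1)) (F y)" using t(1)
    by (metis Suc_diff_1 funpow_Suc_right less_eq_Suc_le o_apply One_nat_def)
  then have "leL y (F y)" using t leL_pow[where c="mI a u" and k="t - 1" and w="F y"] unfolding F_def by simp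
  moreover have "leL (F y) (mI u y)" unfolding F_def by (simp add: mI_assoc leL_self)
  ultimately show ?thesis by (rule leL_trans)
qed

lemma stab_R:
  assumes fin: "J_above_finite TYPE('a::semigroup_mult)"
    and J: "leJ y (mI y u)"
  shows "leR (y::'a option) (mI y u)"
proof (cases y)
  case None
  then have "u = None" using J leJ_None by (cases u) auto
  then show ?thesis using None by simp
next
  case (Some x)
  obtain a b where ab: "y = mI (mI a (mI y u)) b" using J unfolding leJ_def by blast
  define F where "F = (\<lambda>z. mI z (mI u b))"
  define G where "G = (\<lambda>z. mI a z)"
  have comm: "\<And>z. F (G z) = G (F z)" unfolding F_def G_def by (simp add: mI_assoc)
  have fx: "F (G y) = y" using ab unfolding F_def G_def by (simp add: mI_assoc)
  have mem: "(F ^^ k) y \<in> Afin x" for k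
  proof -
    have "(F ^^ k) ((G ^^ k) y) = y" by (rule funpow_fix[of F G y, OF fx comm])
    moreover have "(F ^^ k) ((G ^^ k) y) = (G ^^ k) ((F ^^ k) y)"
      by (rule funpow_comm2[of F G, OF comm])
    ultimately have "leL y ((F ^^ k) y)" using leL_pow[where c=a and k=k and w="(F ^^ k) y"] unfolding G_def by simp
    then show ?thesis using Some by (intro Afin_mem) (simp add: leL_leJ)
  qed
  obtain t where t: "t \<ge> 1" "(F ^^ t) y = y"
    using stab_core[OF comm fx Afin_finite[OF fin] mem] by blast
  have "(F ^^ t) y = (F ^^ (t - 1)) (F y)" using t(1)
    by (metis Suc_diff_1 funpow_Suc_right less_eq_Suc_le o_apply One_nat_def)
  then have "leR y (F y)" using t leR_pow[where c="mI u b" and k="t - 1" and w="F y"] unfolding F_def by simp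
  moreover have "leR (F y) (mI y u)" unfolding F_def by (simp add: mI_assoc[symmetric] leR_self)
  ultimately show ?thesis by (rule leR_trans)
qed

context
  fixes dummy :: "'a::semigroup_mult itself"
  assumes fin: "J_above_finite TYPE('a)"
begin

lemma leL_J_eqL: "leL (x::'a option) y \<Longrightarrow> leJ y x \<Longrightarrow> eqL x y"
proof -
  assume a: "leL x y" "leJ y x"
  then obtain u where u: "x = mI u y" unfolding leL_def by blast
  have "leL y x" using stab_L[OF fin, of y u] a(2) u by simp
  then show ?thesis using a(1) unfolding eqL_def by simp
qed

lemma leR_J_eqR: "leR (x::'a option) y \<Longrightarrow> leJ y x \<Longrightarrow> eqR x y"
proof -
  assume a: "leR x y" "leJ y x"
  then obtain u where u: "x = mI y u" unfolding leR_def by blast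
  have "leR y x" using stab_R[OF fin, of y u] a(2) u by simp
  then show ?thesis using a(1) unfolding eqR_def by simp
qed

lemma ltL_ltJ: "ltL (x::'a option) y \<Longrightarrow> ltJ x y"
proof -
  assume a: "ltL x y"
  then have "leJ x y" unfolding ltL_def by (simp add: leL_leJ)
  moreover have "\<not> leJ y x"
  proof
    assume "leJ y x"
    then have "eqL x y" using leL_J_eqL a unfolding ltL_def by blast
    then show False using a unfolding ltL_def eqL_def by blast
  qed
  ultimately show ?thesis unfolding ltJ_def by blast
qed

end

lemma ltJ_trans: "ltJ x y \<Longrightarrow> ltJ y z \<Longrightarrow> ltJ x z"
  unfolding ltJ_def by (meson leJ_trans)

lemma ltJ_irrefl: "\<not> ltJ x x" unfolding ltJ_def by simp

definition chainJ :: "'a::semigroup_mult option \<Rightarrow> nat \<Rightarrow> bool" where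
  "chainJ m k \<longleftrightarrow> (\<exists>c::nat \<Rightarrow> 'a option. c 0 = m \<and> (\<forall>i<k. ltJ (c i) (c (Suc i))))"

lemma hJ_chainJ: "hJ m = (GREATEST k. chainJ m k)"
  unfolding hJ_def chainJ_def by simp

lemma chain_leJ:
  assumes "\<forall>i<k. ltJ (c i) (c (Suc i))" "i \<le> k"
  shows "leJ (c 0) (c i)"
  using assms(2)
proof (induction i)
  case 0 then show ?case by simp
next
  case (Suc i)
  then have "leJ (c 0) (c i)" by simp
  moreover have "ltJ (c i) (c (Suc i))" using assms(1) Suc.prems by simp
  ultimately show ?case unfolding ltJ_def using leJ_trans by blast
qed

lemma chain_ltJ:
  assumes "\<forall>i<k. ltJ (c i) (c (Suc i))" "i < j" "j \<le> k"
  shows "ltJ (c i) (c j)"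
  using assms(2,3)
proof (induction j)
  case 0 then show ?case by simp
next
  case (Suc j)
  have l: "ltJ (c j) (c (Suc j))" using assms(1) Suc.prems by simp
  show ?case
  proof (cases "i = j")
    case True then show ?thesis using l by simp
  next
    case False
    then have "ltJ (c i) (c j)" using Suc by simp
    then show ?thesis using l ltJ_trans by blast
  qed
qed

lemma hJ_bound:
  assumes fin: "J_above_finite TYPE('a::semigroup_mult)"
  shows "\<exists>B. \<forall>k. chainJ (m::'a option) k \<longrightarrow> k \<le> B"
proof (cases m)
  case None
  have "k = 0" if ch: "chainJ m k" for k
  proof (rule ccontr)
    assume "k \<noteq> 0"
    obtain c where c: "c 0 = m" "\<forall>i<k. ltJ (c i) (c (Suc i))" using ch unfolding chainJ_def by blast
    have "ltJ (c 0) (c (Suc 0))" using \<open>k \<noteq> 0\<close> c(2) by simp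
    then have "ltJ None (c (Suc 0))" using c(1) None by simp
    then have "leJ None (c (Suc 0))" "\<not> leJ (c (Suc 0)) None" unfolding ltJ_def by auto
    then show False using leJ_top by blast
  qed
  then show ?thesis by (intro exI[of _ 0]) auto
next
  case (Some x)
  have "k \<le> card (Afin x)" if ch: "chainJ m k" for k
  proof -
    obtain c where c: "c 0 = m" "\<forall>i<k. ltJ (c i) (c (Suc i))" using ch unfolding chainJ_def by blast
    have sub: "c ` {0..k} \<subseteq> Afin x"
    proof
      fix w assume "w \<in> c ` {0..k}"
      then obtain i where "i \<le> k" "w = c i" by auto
      then have "leJ (Some x) w" using chain_leJ[OF c(2)] c(1) Some by simp
      then show "w \<in> Afin x" by (rule Afin_mem)
    qed
    have "inj_on c {0..k}"
    proof (rule inj_onI)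
      fix i j assume ij: "i \<in> {0..k}" "j \<in> {0..k}" "c i = c j"
      show "i = j"
      proof (rule ccontr)
        assume "i \<noteq> j"
        then consider "i < j" | "j < i" by linarith
        then show False
        proof cases
          case 1
          have "ltJ (c i) (c j)" using chain_ltJ[OF c(2) 1] ij(2) by simp
          then show False using ij(3) ltJ_irrefl by metis
        next
          case 2
          have "ltJ (c j) (c i)" using chain_ltJ[OF c(2) 2] ij(1) by simp
          then show False using ij(3) ltJ_irrefl by metis
        qed
      qed
    qed
    then have "card (c ` {0..k}) = Suc k" by (simp add: card_image)
    then have "Suc k \<le> card (Afin x)" using card_mono[OF Afin_finite[OF fin] sub] by simp
    then show ?thesis by simp
  qed
  then show ?thesis by (intro exI[of _ "card (Afin x)"]) blast
qed

context
  fixes dummy :: "'a::semigroup_mult itself"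
  assumes fin: "J_above_finite TYPE('a)"
begin

lemma hJ_prop: "chainJ (m::'a option) (hJ m)"
proof -
  obtain B where B: "\<forall>k. chainJ m k \<longrightarrow> k \<le> B" using hJ_bound[OF fin] by blast
  have "chainJ m 0" unfolding chainJ_def by auto
  then show ?thesis unfolding hJ_chainJ using B by (metis GreatestI_nat)
qed

lemma hJ_ge: "chainJ (m::'a option) k \<Longrightarrow> k \<le> hJ m"
proof -
  assume k: "chainJ m k"
  obtain B where B: "\<forall>k. chainJ m k \<longrightarrow> k \<le> B" using hJ_bound[OF fin] by blast
  show ?thesis unfolding hJ_chainJ using B k by (metis Greatest_le_nat)
qed

lemma hJ_lt: "ltJ (x::'a option) y \<Longrightarrow> hJ y < hJ x"
proof -
  assume xy: "ltJ x y"
  obtain c where c: "c 0 = y" "\<forall>i<hJ y. ltJ (c i) (c (Suc i))"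
    using hJ_prop[of y] unfolding chainJ_def by blast
  define c' where "c' = (\<lambda>i. if i = 0 then x else c (i - 1))"
  have "chainJ x (Suc (hJ y))"
    unfolding chainJ_def
  proof (intro exI[of _ c'] conjI allI impI)
    show "c' 0 = x" by (simp add: c'_def)
    fix i assume "i < Suc (hJ y)"
    then show "ltJ (c' i) (c' (Suc i))"
      using c xy by (cases i) (auto simp: c'_def)
  qed
  then show ?thesis using hJ_ge by fastforce
qed

lemma hJ_le_J: "leJ (x::'a option) y \<Longrightarrow> leJ y x \<Longrightarrow> hJ y \<le> hJ x"
proof -
  assume xy: "leJ x y" and yx: "leJ y x"
  obtain c where c: "c 0 = y" "\<forall>i<hJ y. ltJ (c i) (c (Suc i))"
    using hJ_prop[of y] unfolding chainJ_def by blast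
  define c' where "c' = (\<lambda>i. if i = 0 then x else c i)"
  have "chainJ x (hJ y)"
    unfolding chainJ_def
  proof (intro exI[of _ c'] conjI allI impI)
    show "c' 0 = x" by (simp add: c'_def)
    fix i assume i: "i < hJ y"
    show "ltJ (c' i) (c' (Suc i))"
    proof (cases i)
      case 0
      then have "ltJ y (c 1)" using c i by auto
      then show ?thesis using 0 xy yx unfolding c'_def ltJ_def by (auto intro: leJ_trans)
    next
      case (Suc j) then show ?thesis using c i by (auto simp: c'_def)
    qed
  qed
  then show ?thesis using hJ_ge by blast
qed

lemma hJ_eqJ: "leJ (x::'a option) y \<Longrightarrow> leJ y x \<Longrightarrow> hJ x = hJ y"
  using hJ_le_J by (meson le_antisym)

lemma hJ_mono: "leJ (x::'a option) y \<Longrightarrow> hJ y \<le> hJ x"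
  using hJ_le_J hJ_lt unfolding ltJ_def by (meson less_imp_le_nat)

lemma hJ_eqL: "eqL (x::'a option) y \<Longrightarrow> hJ x = hJ y"
  unfolding eqL_def using hJ_eqJ leL_leJ by blast

lemma hJ_eq_leJ: "leJ (x::'a option) y \<Longrightarrow> hJ x = hJ y \<Longrightarrow> leJ y x"
  using hJ_lt unfolding ltJ_def by fastforce

lemma hJ_multr: "hJ (x::'a option) \<le> hJ (mI x n)"
  by (rule hJ_mono) (rule leJ_selfr)

end


fun Fm :: "'a::semigroup_mult option list \<Rightarrow> 'a option list" where
  "Fm [] = []"
| "Fm (x # xs) = x # Fm (filter (\<lambda>y. \<not> eqL y x) xs)"

declare Fm.simps(2)[simp del]

lemma Fm_cons: "Fm (x # xs) = x # Fm (filter (\<lambda>y. \<not> eqL y x) xs)" by (rule Fm.simps(2))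

lemma Fm_set: "set (Fm xs) \<subseteq> set xs"
  by (induction xs rule: Fm.induct) (auto simp: Fm_cons)

lemma Fm_nil[simp]: "Fm xs = [] \<longleftrightarrow> xs = []"
  by (cases xs) (auto simp: Fm_cons)

lemma Fm_hd: "xs \<noteq> [] \<Longrightarrow> hd (Fm xs) = hd xs"
  by (cases xs) (auto simp: Fm_cons)

lemma Fm_cls: "a \<in> set xs \<Longrightarrow> \<exists>b\<in>set (Fm xs). eqL a b"
proof (induction xs rule: Fm.induct)
  case 1 then show ?case by simp
next
  case (2 x xs)
  show ?case
  proof (cases "a = x \<or> eqL a x")
    case True then show ?thesis by (auto simp: Fm_cons)
  next
    case False
    then have "a \<in> set (filter (\<lambda>y. \<not> eqL y x) xs)" using 2(2) by auto
    then show ?thesis using 2(1) by (auto simp: Fm_cons)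
  qed
qed

definition Linv :: "('a::semigroup_mult option \<Rightarrow> bool) \<Rightarrow> bool" where
  "Linv P \<longleftrightarrow> (\<forall>x y. eqL x y \<longrightarrow> P x = P y)"

lemma Linv_NL: "Linv (\<lambda>y. \<not> eqL y x)"
  unfolding Linv_def using eqL_sym eqL_trans by blast

lemma Fm_filter: "Linv P \<Longrightarrow> filter P (Fm B) = Fm (filter P B)"
proof (induction B rule: Fm.induct)
  case 1 then show ?case by simp
next
  case (2 x xs)
  show ?case
  proof (cases "P x")
    case True
    have "filter P (Fm (x # xs)) = x # Fm (filter P (filter (\<lambda>y. \<not> eqL y x) xs))"
      using True 2 by (simp add: Fm_cons)
    also have "filter P (filter (\<lambda>y. \<not> eqL y x) xs) = filter (\<lambda>y. \<not> eqL y x) (filter P xs)"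
      by (simp add: filter_filter conj_commute)
    finally show ?thesis using True by (simp add: Fm_cons)
  next
    case False
    have "filter P (Fm (x # xs)) = Fm (filter P (filter (\<lambda>y. \<not> eqL y x) xs))"
      using False 2 by (simp add: Fm_cons)
    also have "filter P (filter (\<lambda>y. \<not> eqL y x) xs) = filter P xs"
      unfolding filter_filter
    proof (rule filter_cong)
      fix y assume "y \<in> set xs"
      show "(\<not> eqL y x \<and> P y) = P y" using False 2(2) unfolding Linv_def by metis
    qed simp
    finally show ?thesis using False by simp
  qed
qed

lemma Fm_Fm: "Fm (Fm B) = Fm B"
proof (induction B rule: Fm.induct)
  case 1 then show ?case by simp
next
  case (2 x xs)
  have "Fm (Fm (x # xs)) = x # Fm (filter (\<lambda>y. \<not> eqL y x) (Fm (filter (\<lambda>y. \<not> eqL y x) xs)))"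
    by (simp add: Fm_cons)
  also have "filter (\<lambda>y. \<not> eqL y x) (Fm (filter (\<lambda>y. \<not> eqL y x) xs))
     = Fm (filter (\<lambda>y. \<not> eqL y x) xs)"
    by (simp add: Fm_filter[OF Linv_NL] 2)
  finally show ?case using 2 by (simp add: Fm_cons)
qed

lemma NL_aux: "\<not> eqL z x \<Longrightarrow> (\<forall>a\<in>set (filter (\<lambda>y. \<not> eqL y x) xs). \<not> eqL z a)
   \<Longrightarrow> a \<in> set xs \<Longrightarrow> \<not> eqL z a"
  by (cases "eqL a x") (auto dest: eqL_trans)

lemma Fm_append:
  "Fm (A @ B) = Fm A @ Fm (filter (\<lambda>z. \<forall>a\<in>set A. \<not> eqL z a) B)"
proof (induction A arbitrary: B rule: Fm.induct)
  case 1 then show ?case by simp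
next
  case (2 x xs)
  have "Fm ((x # xs) @ B) = x # Fm (filter (\<lambda>y. \<not> eqL y x) xs @ filter (\<lambda>y. \<not> eqL y x) B)"
    by (simp add: Fm_cons)
  also have "\<dots> = x # Fm (filter (\<lambda>y. \<not> eqL y x) xs) @
     Fm (filter (\<lambda>z. \<forall>a\<in>set (filter (\<lambda>y. \<not> eqL y x) xs). \<not> eqL z a) (filter (\<lambda>y. \<not> eqL y x) B))"
    using 2 by simp
  also have "filter (\<lambda>z. \<forall>a\<in>set (filter (\<lambda>y. \<not> eqL y x) xs). \<not> eqL z a) (filter (\<lambda>y. \<not> eqL y x) B)
     = filter (\<lambda>z. \<forall>a\<in>set (x # xs). \<not> eqL z a) B"
    unfolding filter_filter
  proof (rule filter_cong)
    fix z assume "z \<in> set B"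
    show "((\<not> eqL z x) \<and> (\<forall>a\<in>set (filter (\<lambda>y. \<not> eqL y x) xs). \<not> eqL z a)) =
          (\<forall>a\<in>set (x # xs). \<not> eqL z a)"
      using NL_aux[of z x xs] by auto
  qed simp
  finally show ?case by (simp add: Fm_cons)
qed

lemma Fm_left: "Fm (Fm A @ B) = Fm (A @ B)"
proof -
  have "(\<lambda>z. \<forall>a\<in>set (Fm A). \<not> eqL z a) = (\<lambda>z. \<forall>a\<in>set A. \<not> eqL z a)"
  proof (rule ext)
    fix z
    show "(\<forall>a\<in>set (Fm A). \<not> eqL z a) = (\<forall>a\<in>set A. \<not> eqL z a)"
    proof
      assume h: "\<forall>a\<in>set (Fm A). \<not> eqL z a"
      show "\<forall>a\<in>set A. \<not> eqL z a"
      proof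
        fix a assume "a \<in> set A"
        then obtain b where "b \<in> set (Fm A)" "eqL a b" using Fm_cls by blast
        then show "\<not> eqL z a" using h eqL_trans by blast
      qed
    qed (use Fm_set in blast)
  qed
  then show ?thesis by (simp add: Fm_append Fm_Fm)
qed

lemma Fm_right: "Fm (A @ Fm B) = Fm (A @ B)"
proof -
  have "Linv (\<lambda>z. \<forall>a\<in>set A. \<not> eqL z a)"
    unfolding Linv_def using eqL_sym eqL_trans by blast
  then show ?thesis by (simp add: Fm_append Fm_filter Fm_Fm)
qed

lemma Fm_map:
  assumes f: "\<And>x y. eqL x y \<Longrightarrow> eqL (f x) (f y)"
  shows "Fm (map f (Fm w)) = Fm (map f w)"
proof (induction "length w" arbitrary: w rule: less_induct)
  case less
  show ?case
  proof (cases w)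
    case Nil then show ?thesis by simp
  next
    case (Cons x xs)
    define P where "P = (\<lambda>y. \<not> eqL (f y) (f x))"
    have LP: "Linv P" unfolding Linv_def P_def using f eqL_sym eqL_trans by blast
    have "Fm (map f (Fm w)) = f x # Fm (filter (\<lambda>y. \<not> eqL y (f x)) (map f (Fm (filter (\<lambda>y. \<not> eqL y x) xs))))"
      using Cons by (simp add: Fm_cons)
    also have "filter (\<lambda>y. \<not> eqL y (f x)) (map f (Fm (filter (\<lambda>y. \<not> eqL y x) xs)))
       = map f (filter P (Fm (filter (\<lambda>y. \<not> eqL y x) xs)))"
      by (simp add: filter_map P_def comp_def)
    also have "\<dots> = map f (Fm (filter P (filter (\<lambda>y. \<not> eqL y x) xs)))"
      by (simp only: Fm_filter[OF LP])
    also have "filter P (filter (\<lambda>y. \<not> eqL y x) xs) = filter P xs"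
      unfolding filter_filter
    proof (rule filter_cong)
      fix y assume "y \<in> set xs"
      show "(\<not> eqL y x \<and> P y) = P y" unfolding P_def using f by blast
    qed simp
    also have "Fm (map f (Fm (filter P xs))) = Fm (map f (filter P xs))"
      using less Cons by (simp add: le_imp_less_Suc)
    also have "map f (filter P xs) = filter (\<lambda>y. \<not> eqL y (f x)) (map f xs)"
      by (simp add: filter_map P_def comp_def)
    finally show ?thesis using Cons by (simp add: Fm_cons)
  qed
qed

lemma lm_Fm: "sorted_wrt leL w \<Longrightarrow> lm w = Fm w"
proof (induction w rule: lm.induct)
  case 1 then show ?case by simp
next
  case (2 x) then show ?case by (simp add: Fm_cons)
next
  case (3 x y zs)
  show ?case
  proof (cases "eqL x y")
    case True
    have "lm (x # y # zs) = Fm (x # zs)" using True 3 by simp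
    moreover have "filter (\<lambda>z. \<not> eqL z x) (y # zs) = filter (\<lambda>z. \<not> eqL z x) zs"
      using True eqL_sym by simp
    ultimately show ?thesis unfolding Fm_cons by simp
  next
    case False
    have "lm (x # y # zs) = x # Fm (y # zs)" using False 3 by simp
    moreover have "filter (\<lambda>z. \<not> eqL z x) (y # zs) = y # zs"
    proof (rule filter_True)
      show "\<forall>z\<in>set (y # zs). \<not> eqL z x"
      proof
        fix z assume z: "z \<in> set (y # zs)"
        show "\<not> eqL z x"
        proof
          assume "eqL z x"
          then have "leL z x" unfolding eqL_def by simp
          moreover have "leL x y" "leL y z \<or> z = y" using 3(3) z by auto
          ultimately have "leL y x" using leL_trans by auto
          then show False using False \<open>leL x y\<close> unfolding eqL_def by simp
        qed
      qed
    qed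
    ultimately show ?thesis by (simp add: Fm_cons)
  qed
qed

lemma Fm_sorted: "sorted_wrt leL w \<Longrightarrow> sorted_wrt ltL (Fm w)"
proof (induction w rule: Fm.induct)
  case 1 then show ?case by simp
next
  case (2 x xs)
  have s: "sorted_wrt leL (filter (\<lambda>y. \<not> eqL y x) xs)" using 2(2) sorted_wrt_filter by auto
  have "\<forall>z\<in>set (Fm (filter (\<lambda>y. \<not> eqL y x) xs)). ltL x z"
  proof
    fix z assume "z \<in> set (Fm (filter (\<lambda>y. \<not> eqL y x) xs))"
    then have "z \<in> set xs" "\<not> eqL z x" using Fm_set[of "filter (\<lambda>y. \<not> eqL y x) xs"] by auto
    then show "ltL x z" using 2(2) unfolding ltL_def eqL_def by auto
  qed
  then show ?case using 2(1)[OF s] by (simp add: Fm_cons)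
qed

lemma Fm_strict: "sorted_wrt ltL w \<Longrightarrow> Fm w = w"
proof (induction w rule: Fm.induct)
  case 1 then show ?case by simp
next
  case (2 x xs)
  have "filter (\<lambda>y. \<not> eqL y x) xs = xs"
    using 2(2) by (intro filter_True) (auto simp: ltL_def eqL_def)
  then show ?case using 2 by (simp add: Fm_cons)
qed

lemma last_filter_keep: "P (last xs) \<Longrightarrow> xs \<noteq> [] \<Longrightarrow> last (filter P xs) = last xs"
  by (metis append_butlast_last_id filter.simps(1) filter.simps(2) filter_append last_snoc)

lemma Fm_last:
  "sorted_wrt leL w \<Longrightarrow> w \<noteq> [] \<Longrightarrow> last (Fm w) = hd (filter (\<lambda>z. eqL z (last w)) w)"
proof (induction w rule: Fm.induct)
  case 1 then show ?case by simp
next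
  case (2 x xs)
  show ?case
  proof (cases "filter (\<lambda>y. \<not> eqL y x) xs = []")
    case True
    then have all: "\<forall>y\<in>set xs. eqL y x" by (simp add: filter_empty_conv)
    have "eqL x (last (x # xs))"
      using all eqL_sym by (cases xs) auto
    then show ?thesis using True by (simp add: Fm_cons)
  next
    case False
    define ys where "ys = filter (\<lambda>y. \<not> eqL y x) xs"
    have xs: "xs \<noteq> []" using False by auto
    obtain z where z: "z \<in> set xs" "\<not> eqL z x" using False by (auto simp: filter_empty_conv)
    have nl: "\<not> eqL (last xs) x"
    proof
      assume h: "eqL (last xs) x"
      have "leL x z" using 2(2) z by simp
      moreover have "leL z (last xs)"
      proof (cases "z = last xs")
        case True then show ?thesis by simp
      next
        case False
        then obtain i where i: "i < length xs - 1" "xs ! i = z"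
          using z(1) xs by (metis in_set_conv_nth last_conv_nth less_SucE Suc_diff_1 length_greater_0_conv)
        have "sorted_wrt leL xs" using 2(2) by simp
        then show ?thesis using i xs
          by (metis diff_less last_conv_nth length_greater_0_conv less_one sorted_wrt_nth_less)
      qed
      ultimately have "leL z x" using h leL_trans unfolding eqL_def by blast
      then show False using z(2) \<open>leL x z\<close> unfolding eqL_def by simp
    qed
    have lys: "last ys = last xs" unfolding ys_def by (rule last_filter_keep[where P="\<lambda>y. \<not> eqL y x", OF nl xs])
    have ys: "ys \<noteq> []" using False ys_def by simp
    have sy: "sorted_wrt leL ys" unfolding ys_def using 2(2) sorted_wrt_filter by auto
    have "last (Fm (x # xs)) = last (Fm ys)" using ys by (simp add: Fm_cons ys_def)
    also have "\<dots> = hd (filter (\<lambda>z. eqL z (last ys)) ys)" using 2(1) sy ys ys_def by simp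
    also have "filter (\<lambda>z. eqL z (last ys)) ys = filter (\<lambda>z. eqL z (last xs)) xs"
      unfolding lys unfolding ys_def filter_filter
    proof (rule filter_cong)
      fix y assume "y \<in> set xs"
      show "(\<not> eqL y x \<and> eqL y (last xs)) = eqL y (last xs)"
        using nl eqL_sym eqL_trans by blast
    qed simp
    also have "\<dots> = filter (\<lambda>z. eqL z (last (x # xs))) (x # xs)"
      using nl xs eqL_sym by (simp, blast)
    finally show ?thesis .
  qed
qed


lemma rhodesD: "\<sigma> \<in> rhodes \<Longrightarrow> \<sigma> \<noteq> [] \<and> last \<sigma> = None \<and> sorted_wrt ltL \<sigma>"
  unfolding rhodes_def by simp

lemma ltL_leL: "ltL x y \<Longrightarrow> leL x y" unfolding ltL_def by simp

lemma rh_sortedL: "\<sigma> \<in> rhodes \<Longrightarrow> sorted_wrt leL \<sigma>"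
  by (rule sorted_wrt_mono_rel[of _ ltL]) (auto simp: ltL_leL dest: rhodesD)

lemma rh_hd_tl: "\<sigma> \<in> rhodes \<Longrightarrow> \<sigma> = hd \<sigma> # tl \<sigma>"
  by (drule rhodesD) simp

lemma rh_input_eq:
  assumes "\<sigma> \<in> rhodes" "\<tau> \<in> rhodes"
  shows "map (\<lambda>m. mI m (hd \<tau>)) (butlast \<sigma>) @ \<tau> = map (\<lambda>m. mI m (hd \<tau>)) \<sigma> @ tl \<tau>"
proof -
  have s: "\<sigma> = butlast \<sigma> @ [None]" using rhodesD[OF assms(1)] append_butlast_last_id by metis
  have "map (\<lambda>m. mI m (hd \<tau>)) (butlast \<sigma> @ [None]) = map (\<lambda>m. mI m (hd \<tau>)) (butlast \<sigma>) @ [hd \<tau>]"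
    by simp
  then have "map (\<lambda>m. mI m (hd \<tau>)) \<sigma> = map (\<lambda>m. mI m (hd \<tau>)) (butlast \<sigma>) @ [hd \<tau>]"
    using s by metis
  then show ?thesis using rh_hd_tl[OF assms(2)] by simp
qed

lemma rh_input_sorted:
  assumes "\<sigma> \<in> rhodes" "\<tau> \<in> rhodes"
  shows "sorted_wrt leL (map (\<lambda>m. mI m (hd \<tau>)) \<sigma> @ tl \<tau>)"
proof -
  have s1: "sorted_wrt leL (map (\<lambda>m. mI m (hd \<tau>)) \<sigma>)"
    unfolding sorted_wrt_map
    by (rule sorted_wrt_mono_rel[OF _ rh_sortedL[OF assms(1)]]) (simp add: leL_multr)
  have s2: "sorted_wrt leL (tl \<tau>)" using rh_sortedL[OF assms(2)] by (metis sorted_wrt.simps(2) rh_hd_tl[OF assms(2)])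
  have s3: "\<forall>a\<in>set (map (\<lambda>m. mI m (hd \<tau>)) \<sigma>). \<forall>b\<in>set (tl \<tau>). leL a b"
  proof (intro ballI)
    fix a b assume a: "a \<in> set (map (\<lambda>m. mI m (hd \<tau>)) \<sigma>)" and b: "b \<in> set (tl \<tau>)"
    have "leL a (hd \<tau>)" using a leL_self by auto
    moreover have "leL (hd \<tau>) b" using rh_sortedL[OF assms(2)] b rh_hd_tl[OF assms(2)]
      by (metis sorted_wrt.simps(2))
    ultimately show "leL a b" by (rule leL_trans)
  qed
  show ?thesis using s1 s2 s3 by (simp add: sorted_wrt_append)
qed

lemma rh_mult_eq:
  assumes "\<sigma> \<in> rhodes" "\<tau> \<in> rhodes"
  shows "rh_mult \<sigma> \<tau> = Fm (map (\<lambda>m. mI m (hd \<tau>)) \<sigma> @ tl \<tau>)"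
  unfolding rh_mult_def rh_input_eq[OF assms]
  by (rule lm_Fm[OF rh_input_sorted[OF assms]])

lemma None_last: "sorted_wrt ltL xs \<Longrightarrow> None \<in> set xs \<Longrightarrow> last xs = None"
proof -
  assume s: "sorted_wrt ltL xs" and n: "None \<in> set xs"
  obtain ys zs where xs: "xs = ys @ None # zs" using n split_list by fastforce
  have "zs = []"
  proof (rule ccontr)
    assume "zs \<noteq> []"
    then have "ltL None (hd zs)" using s xs by (simp add: sorted_wrt_append)
    then show False unfolding ltL_def using leL_None by fastforce
  qed
  then show ?thesis using xs by simp
qed

lemma rh_mult_rhodes:
  assumes "\<sigma> \<in> rhodes" "\<tau> \<in> rhodes"
  shows "rh_mult \<sigma> \<tau> \<in> rhodes"
proof -
  define W where "W = map (\<lambda>m. mI m (hd \<tau>)) \<sigma> @ tl \<tau>"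
  have ne: "W \<noteq> []" using rhodesD[OF assms(1)] W_def by simp
  have lastW: "last W = None"
  proof (cases "tl \<tau> = []")
    case True
    then have "\<tau> = [hd \<tau>]" using rh_hd_tl[OF assms(2)] by simp
    then have "hd \<tau> = None" using rhodesD[OF assms(2)] by (metis last.simps)
    then show ?thesis using True rhodesD[OF assms(1)] W_def by (simp add: last_map)
  next
    case False
    then have "last (tl \<tau>) = None" using rhodesD[OF assms(2)] rh_hd_tl[OF assms(2)] by (metis last_ConsR)
    then show ?thesis using False W_def by simp
  qed
  have "None \<in> set W" using ne lastW by (metis last_in_set)
  then obtain b where b: "b \<in> set (Fm W)" "eqL None b" using Fm_cls by blast
  then have "b = None" using eqL_None eqL_sym by blast
  have so: "sorted_wrt ltL (Fm W)" using Fm_sorted rh_input_sorted[OF assms] W_def by simp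
  have "last (Fm W) = None" using None_last[OF so] b \<open>b = None\<close> by simp
  then show ?thesis unfolding rhodes_def using rh_mult_eq[OF assms] W_def so ne by simp
qed

lemma rh_mult_split:
  assumes "\<sigma> \<in> rhodes" "\<tau> \<in> rhodes"
  shows "rh_mult \<sigma> \<tau> = Fm (map (\<lambda>m. mI m (hd \<tau>)) \<sigma>) @ tl \<tau>"
proof -
  define A where "A = map (\<lambda>m. mI m (hd \<tau>)) \<sigma>"
  have st: "sorted_wrt ltL \<tau>" using rhodesD[OF assms(2)] by simp
  have "filter (\<lambda>z. \<forall>a\<in>set A. \<not> eqL z a) (tl \<tau>) = tl \<tau>"
  proof (rule filter_True, intro ballI)
    fix z a assume z: "z \<in> set (tl \<tau>)" and a: "a \<in> set A"
    have la: "leL a (hd \<tau>)" using a A_def leL_self by auto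
    have lz: "ltL (hd \<tau>) z" using st z rh_hd_tl[OF assms(2)] by (metis sorted_wrt.simps(2))
    show "\<not> eqL z a"
    proof
      assume "eqL z a"
      then have "leL z (hd \<tau>)" using la leL_trans unfolding eqL_def by blast
      then show False using lz unfolding ltL_def by simp
    qed
  qed
  moreover have "Fm (tl \<tau>) = tl \<tau>"
    using st rh_hd_tl[OF assms(2)] Fm_strict by (metis sorted_wrt.simps(2))
  ultimately show ?thesis using rh_mult_eq[OF assms] Fm_append[of A "tl \<tau>"] A_def by simp
qed

definition ract :: "'a::semigroup_mult option list \<Rightarrow> 'a option \<Rightarrow> 'a option" where
  "ract \<rho> x = last (Fm (map (\<lambda>m. mI m x) \<rho>))"

lemma rh_mult_len: "\<rho> \<in> rhodes \<Longrightarrow> \<sigma> \<in> rhodes \<Longrightarrow> length \<sigma> \<le> length (rh_mult \<rho> \<sigma>)"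
proof -
  assume a: "\<rho> \<in> rhodes" "\<sigma> \<in> rhodes"
  define F where "F = Fm (map (\<lambda>m. mI m (hd \<sigma>)) \<rho>)"
  have "F \<noteq> []" using rhodesD[OF a(1)] F_def by simp
  then have "length F \<ge> 1" by (simp add: Suc_leI)
  moreover have "length (rh_mult \<rho> \<sigma>) = length F + length (tl \<sigma>)"
    using rh_mult_split[OF a] F_def by simp
  moreover have "length (tl \<sigma>) = length \<sigma> - 1" by simp
  ultimately show ?thesis by linarith
qed

lemma EV:
  assumes "\<rho> \<in> rhodes" "\<sigma> \<in> rhodes" "i < length \<sigma>"
  shows "rev (rh_mult \<rho> \<sigma>) ! i = (if i = length \<sigma> - 1 then ract \<rho> (hd \<sigma>) else rev \<sigma> ! i)"
proof -
  define F where "F = Fm (map (\<lambda>m. mI m (hd \<sigma>)) \<rho>)"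
  have F: "F \<noteq> []" using rhodesD[OF assms(1)] F_def by simp
  have r: "rev (rh_mult \<rho> \<sigma>) = rev (tl \<sigma>) @ rev F" using rh_mult_split[OF assms(1,2)] F_def by simp
  have rs: "rev \<sigma> = rev (tl \<sigma>) @ [hd \<sigma>]" using rh_hd_tl[OF assms(2)] by (metis rev.simps(2))
  have lt: "length (tl \<sigma>) = length \<sigma> - 1" by simp
  show ?thesis
  proof (cases "i = length \<sigma> - 1")
    case True
    then have "rev (rh_mult \<rho> \<sigma>) ! i = rev F ! 0" using r lt by (simp add: nth_append)
    also have "\<dots> = last F" using F by (simp add: hd_conv_nth[symmetric] hd_rev)
    finally show ?thesis using True by (simp add: ract_def F_def)
  next
    case False
    then have "i < length (tl \<sigma>)" using assms(3) lt by simp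
    then show ?thesis using r rs False by (simp add: nth_append)
  qed
qed


lemma ract_eq:
  assumes "\<rho> \<in> rhodes"
  shows "ract \<rho> x = mI (hd (filter (\<lambda>m. eqL (mI m x) x) \<rho>)) x"
proof -
  have s: "sorted_wrt leL (map (\<lambda>m. mI m x) \<rho>)"
    unfolding sorted_wrt_map
    by (rule sorted_wrt_mono_rel[OF _ rh_sortedL[OF assms]]) (simp add: leL_multr)
  have ne: "map (\<lambda>m. mI m x) \<rho> \<noteq> []" using rhodesD[OF assms] by simp
  have l: "last (map (\<lambda>m. mI m x) \<rho>) = x" using rhodesD[OF assms] by (simp add: last_map)
  have "ract \<rho> x = hd (filter (\<lambda>z. eqL z x) (map (\<lambda>m. mI m x) \<rho>))"
    unfolding ract_def using Fm_last[OF s ne] l by simp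
  also have "\<dots> = hd (map (\<lambda>m. mI m x) (filter (\<lambda>m. eqL (mI m x) x) \<rho>))"
    by (simp add: filter_map comp_def)
  also have "\<dots> = mI (hd (filter (\<lambda>m. eqL (mI m x) x) \<rho>)) x"
  proof -
    have "None \<in> set \<rho>" using rhodesD[OF assms] by (metis last_in_set)
    then have "filter (\<lambda>m. eqL (mI m x) x) \<rho> \<noteq> []" by (auto simp: filter_empty_conv intro: bexI[of _ None])
    then show ?thesis by (simp add: hd_map)
  qed
  finally show ?thesis .
qed

lemma ract_eqL:
  assumes "\<rho> \<in> rhodes"
  shows "eqL (ract \<rho> x) x"
proof -
  have "None \<in> set \<rho>" using rhodesD[OF assms] by (metis last_in_set)
  then have "filter (\<lambda>m. eqL (mI m x) x) \<rho> \<noteq> []" by (auto simp: filter_empty_conv intro: bexI[of _ None])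
  then have "hd (filter (\<lambda>m. eqL (mI m x) x) \<rho>) \<in> set (filter (\<lambda>m. eqL (mI m x) x) \<rho>)"
    by (rule list.set_sel(1))
  then have "eqL (mI (hd (filter (\<lambda>m. eqL (mI m x) x) \<rho>)) x) x" by simp
  then show ?thesis using ract_eq[OF assms] by simp
qed

context
  fixes dummy :: "'a::semigroup_mult itself"
  assumes fin: "J_above_finite TYPE('a)"
begin

lemma eqL_cancel_r:
  assumes J: "leJ (x::'a option) (mI x n)"
  shows "eqL (mI m (mI x n)) (mI x n) \<longleftrightarrow> eqL (mI m x) x"
proof
  assume "eqL (mI m x) x"
  then show "eqL (mI m (mI x n)) (mI x n)" using eqL_multr[of "mI m x" x n] by (simp add: mI_assoc)
next
  assume h: "eqL (mI m (mI x n)) (mI x n)"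
  have "leJ (mI x n) (mI (mI m x) n)" using h unfolding eqL_def by (simp add: mI_assoc leL_leJ)
  moreover have "leJ (mI (mI m x) n) (mI m x)" by (rule leJ_selfr)
  ultimately have "leJ x (mI m x)" using J leJ_trans by blast
  then show "eqL (mI m x) x" using leL_J_eqL[OF fin] leL_self by blast
qed

lemma ract_mult:
  assumes r: "\<rho> \<in> rhodes" and J: "leJ (x::'a option) (mI x n)"
  shows "ract \<rho> (mI x n) = mI (ract \<rho> x) n"
proof -
  have "filter (\<lambda>m. eqL (mI m (mI x n)) (mI x n)) \<rho> = filter (\<lambda>m. eqL (mI m x) x) \<rho>"
    using eqL_cancel_r[OF J] by simp
  then show ?thesis using ract_eq[OF r] by (simp add: mI_assoc)
qed

end

lemma rh_unit: "[None] \<in> rhodes" unfolding rhodes_def by simp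

lemma rh_strict_eq: "\<sigma> \<in> rhodes \<Longrightarrow> Fm \<sigma> = \<sigma>"
  using rhodesD Fm_strict by blast

lemma rh_left_unit: "\<sigma> \<in> rhodes \<Longrightarrow> rh_mult [None] \<sigma> = \<sigma>"
proof -
  assume s: "\<sigma> \<in> rhodes"
  have "rh_mult [None] \<sigma> = hd \<sigma> # tl \<sigma>" using rh_mult_split[OF rh_unit s] by (simp add: Fm_cons)
  then show ?thesis using rh_hd_tl[OF s] by simp
qed

lemma rh_right_unit: "\<sigma> \<in> rhodes \<Longrightarrow> rh_mult \<sigma> [None] = \<sigma>"
proof -
  assume s: "\<sigma> \<in> rhodes"
  have "rh_mult \<sigma> [None] = Fm \<sigma>" using rh_mult_split[OF s rh_unit] by simp
  then show ?thesis using rh_strict_eq[OF s] by simp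
qed

lemma eqL_multr_fun: "eqL x y \<Longrightarrow> eqL ((\<lambda>m. mI m n) x) ((\<lambda>m. mI m n) y)"
  by (simp add: eqL_multr)

lemma rh_assoc:
  assumes a: "a \<in> rhodes" and b: "b \<in> rhodes" and c: "c \<in> rhodes"
  shows "rh_mult (rh_mult a b) c = rh_mult a (rh_mult b c)"
proof -
  define x where "x = hd b"
  define y where "y = hd c"
  have ab: "rh_mult a b \<in> rhodes" using rh_mult_rhodes[OF a b] .
  have bc: "rh_mult b c \<in> rhodes" using rh_mult_rhodes[OF b c] .
  have "rh_mult (rh_mult a b) c = Fm (map (\<lambda>m. mI m y) (rh_mult a b) @ tl c)"
    using rh_mult_eq[OF ab c] y_def by simp
  also have "\<dots> = Fm (Fm (map (\<lambda>m. mI m y) (Fm (map (\<lambda>m. mI m x) a @ tl b))) @ tl c)"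
    using rh_mult_eq[OF a b] x_def by (simp add: Fm_left)
  also have "\<dots> = Fm (Fm (map (\<lambda>m. mI m y) (map (\<lambda>m. mI m x) a @ tl b)) @ tl c)"
    using Fm_map[of "\<lambda>m. mI m y", OF eqL_multr] by simp
  also have "\<dots> = Fm (map (\<lambda>m. mI m (mI x y)) a @ map (\<lambda>m. mI m y) (tl b) @ tl c)"
    by (simp add: Fm_left mI_assoc comp_def)
  finally have lhs: "rh_mult (rh_mult a b) c = Fm (map (\<lambda>m. mI m (mI x y)) a @ map (\<lambda>m. mI m y) (tl b) @ tl c)" .
  define R where "R = map (\<lambda>m. mI m y) (tl b) @ tl c"
  have bcq: "rh_mult b c = mI x y # Fm (filter (\<lambda>z. \<not> eqL z (mI x y)) R)"
  proof -
    have "rh_mult b c = Fm (map (\<lambda>m. mI m y) b @ tl c)" using rh_mult_eq[OF b c] y_def by simp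
    also have "map (\<lambda>m. mI m y) b @ tl c = mI x y # R"
    proof -
      obtain tb where bb: "b = x # tb" using rh_hd_tl[OF b] x_def by metis
      show ?thesis unfolding R_def bb by simp
    qed
    finally show ?thesis by (simp add: Fm_cons)
  qed
  have "rh_mult a (rh_mult b c) = Fm (map (\<lambda>m. mI m (mI x y)) a @ tl (rh_mult b c))"
    using rh_mult_eq[OF a bc] bcq by simp
  also have "\<dots> = Fm (map (\<lambda>m. mI m (mI x y)) a @ filter (\<lambda>z. \<not> eqL z (mI x y)) R)"
    using bcq Fm_right by simp
  also have "\<dots> = Fm (map (\<lambda>m. mI m (mI x y)) a @ R)"
  proof -
    define A where "A = map (\<lambda>m. mI m (mI x y)) a"
    have "None \<in> set a" using rhodesD[OF a] by (metis last_in_set)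
    then have "mI x y \<in> set A" unfolding A_def by force
    then have "filter (\<lambda>z. \<forall>a\<in>set A. \<not> eqL z a) (filter (\<lambda>z. \<not> eqL z (mI x y)) R)
             = filter (\<lambda>z. \<forall>a\<in>set A. \<not> eqL z a) R"
      unfolding filter_filter by (intro filter_cong) auto
    then show ?thesis unfolding A_def[symmetric] by (simp only: Fm_append)
  qed
  finally show ?thesis using lhs R_def by simp
qed


definition Qw :: "'a::semigroup_mult option list \<Rightarrow> 'a option list \<Rightarrow> nat \<Rightarrow> bool" where
  "Qw \<sigma> \<tau> r \<longleftrightarrow> r < length \<sigma> \<and> r < length \<tau> \<and> (\<forall>j<r. rev \<sigma> ! j = rev \<tau> ! j) \<and> eqL (rev \<sigma> ! r) (rev \<tau> ! r)"

definition widx :: "'a::semigroup_mult option list \<Rightarrow> 'a option list \<Rightarrow> nat" where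
  "widx \<sigma> \<tau> = (GREATEST r. Qw \<sigma> \<tau> r)"

lemma wedge_widx: "wedgeL \<sigma> \<tau> = rev \<sigma> ! widx \<sigma> \<tau>"
  unfolding wedgeL_def widx_def Qw_def by simp

lemma Qw_sym: "Qw \<sigma> \<tau> r = Qw \<tau> \<sigma> r"
  unfolding Qw_def using eqL_sym by metis

lemma widx_sym: "widx \<sigma> \<tau> = widx \<tau> \<sigma>"
proof -
  have "Qw \<sigma> \<tau> = Qw \<tau> \<sigma>" by (rule ext) (rule Qw_sym)
  then show ?thesis unfolding widx_def by simp
qed

lemma rev_nth0: "xs \<noteq> [] \<Longrightarrow> rev xs ! 0 = last xs"
  by (simp add: hd_conv_nth[symmetric] hd_rev)

lemma rev_nth_last: "xs \<noteq> [] \<Longrightarrow> rev xs ! (length xs - 1) = hd xs"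
  by (simp add: rev_nth hd_conv_nth)

lemma Qw_0: "\<sigma> \<in> rhodes \<Longrightarrow> \<tau> \<in> rhodes \<Longrightarrow> Qw \<sigma> \<tau> 0"
proof -
  assume s: "\<sigma> \<in> rhodes" and t: "\<tau> \<in> rhodes"
  have "rev \<sigma> ! 0 = None" using rhodesD[OF s] rev_nth0 by metis
  moreover have "rev \<tau> ! 0 = None" using rhodesD[OF t] rev_nth0 by metis
  moreover have "0 < length \<sigma>" "0 < length \<tau>" using rhodesD[OF s] rhodesD[OF t] by auto
  ultimately show ?thesis unfolding Qw_def by simp
qed

lemma widx_Q: "\<sigma> \<in> rhodes \<Longrightarrow> \<tau> \<in> rhodes \<Longrightarrow> Qw \<sigma> \<tau> (widx \<sigma> \<tau>)"
proof -
  assume s: "\<sigma> \<in> rhodes" and t: "\<tau> \<in> rhodes"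
  have b: "\<forall>y. Qw \<sigma> \<tau> y \<longrightarrow> y \<le> length \<sigma>" unfolding Qw_def by simp
  show ?thesis unfolding widx_def by (rule GreatestI_nat[where P="Qw \<sigma> \<tau>", OF Qw_0[OF s t]]) (use b in blast)
qed

lemma widx_ge: "Qw \<sigma> \<tau> r \<Longrightarrow> r \<le> widx \<sigma> \<tau>"
proof -
  assume q: "Qw \<sigma> \<tau> r"
  have b: "\<forall>y. Qw \<sigma> \<tau> y \<longrightarrow> y \<le> length \<sigma>" unfolding Qw_def by simp
  show ?thesis unfolding widx_def by (rule Greatest_le_nat[where P="Qw \<sigma> \<tau>", OF q]) (use b in blast)
qed

lemma Qw_below:
  assumes "Qw \<sigma> \<tau> r'" "r < r'"
  shows "rev \<sigma> ! r = rev \<tau> ! r \<and> r < length \<sigma> - 1 \<and> r < length \<tau> - 1"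
  using assms unfolding Qw_def by auto

lemma Qw_mono:
  assumes "Qw \<sigma> \<tau> r'" "r \<le> r'"
  shows "Qw \<sigma> \<tau> r"
proof -
  have q: "r' < length \<sigma>" "r' < length \<tau>" "\<forall>j<r'. rev \<sigma> ! j = rev \<tau> ! j"
    "eqL (rev \<sigma> ! r') (rev \<tau> ! r')" using assms(1) unfolding Qw_def by auto
  have e: "eqL (rev \<sigma> ! r) (rev \<tau> ! r)"
  proof (cases "r = r'")
    case True then show ?thesis using q(4) by simp
  next
    case False then have "r < r'" using assms(2) by simp
    then show ?thesis using q(3) by simp
  qed
  show ?thesis unfolding Qw_def using q assms(2) e by simp
qed

lemma EV_eq:
  assumes "\<rho> \<in> rhodes" "\<sigma> \<in> rhodes" "i < length \<sigma> - 1"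
  shows "rev (rh_mult \<rho> \<sigma>) ! i = rev \<sigma> ! i"
  using EV[OF assms(1,2)] assms(3) by simp

lemma EV_L:
  assumes "\<rho> \<in> rhodes" "\<sigma> \<in> rhodes" "i < length \<sigma>"
  shows "eqL (rev (rh_mult \<rho> \<sigma>) ! i) (rev \<sigma> ! i)"
proof (cases "i = length \<sigma> - 1")
  case True
  then have "rev (rh_mult \<rho> \<sigma>) ! i = ract \<rho> (hd \<sigma>)" using EV[OF assms] by simp
  moreover have "rev \<sigma> ! i = hd \<sigma>" using True rev_nth_last[of \<sigma>] rhodesD[OF assms(2)] by simp
  ultimately show ?thesis using ract_eqL[OF assms(1)] by simp
next
  case False then show ?thesis using EV[OF assms] by simp
qed

definition Good :: "nat \<Rightarrow> 'a::semigroup_mult option list \<Rightarrow> 'a option list \<Rightarrow> nat \<Rightarrow> bool" where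
  "Good t \<sigma> \<tau> r \<longleftrightarrow> Qw \<sigma> \<tau> r \<and> t \<le> 2 * hJ (rev \<sigma> ! r) + 1 \<and>
     (t \<le> 2 * hJ (rev \<sigma> ! r) \<or> (\<forall>\<rho>\<in>rhodes. eqR (rev (rh_mult \<rho> \<sigma>) ! r) (rev (rh_mult \<rho> \<tau>) ! r)))"

context
  fixes dummy :: "'a::semigroup_mult itself"
  assumes fin: "J_above_finite TYPE('a)"
begin

lemma rh_h_strict:
  assumes "(\<sigma>::'a option list) \<in> rhodes" "i < j" "j < length \<sigma>"
  shows "hJ (rev \<sigma> ! i) < hJ (rev \<sigma> ! j)"
proof -
  have s: "sorted_wrt ltL \<sigma>" using rhodesD[OF assms(1)] by simp
  have "ltL (\<sigma> ! (length \<sigma> - Suc j)) (\<sigma> ! (length \<sigma> - Suc i))"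
    using sorted_wrt_nth_less[OF s] assms(2,3) by simp
  then have "ltL (rev \<sigma> ! j) (rev \<sigma> ! i)" using assms(2,3) by (simp add: rev_nth)
  then show ?thesis using hJ_lt[OF fin] ltL_ltJ[OF fin] by blast
qed

lemma rh_h_mono:
  assumes "(\<sigma>::'a option list) \<in> rhodes" "i \<le> j" "j < length \<sigma>"
  shows "hJ (rev \<sigma> ! i) \<le> hJ (rev \<sigma> ! j)"
  using rh_h_strict[OF assms(1) _ assms(3), of i] assms(2) by (cases "i = j") auto

lemma V_rho:
  assumes s: "(\<sigma>::'a option list) \<in> rhodes" and t: "\<tau> \<in> rhodes" and p: "\<rho> \<in> rhodes"
  shows "(eqL (wedgeL (rh_mult \<rho> \<sigma>) (rh_mult \<rho> \<tau>)) (wedgeL \<sigma> \<tau>) \<longrightarrow>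
      eqR (wedgeL (rh_mult \<rho> \<sigma>) (rh_mult \<rho> \<tau>)) (wedgeL (rh_mult \<rho> \<tau>) (rh_mult \<rho> \<sigma>)))
    \<longleftrightarrow> eqR (rev (rh_mult \<rho> \<sigma>) ! widx \<sigma> \<tau>) (rev (rh_mult \<rho> \<tau>) ! widx \<sigma> \<tau>)"
proof -
  define r where "r = widx \<sigma> \<tau>"
  define \<sigma>' where "\<sigma>' = rh_mult \<rho> \<sigma>"
  define \<tau>' where "\<tau>' = rh_mult \<rho> \<tau>"
  have s': "\<sigma>' \<in> rhodes" using rh_mult_rhodes[OF p s] \<sigma>'_def by simp
  have t': "\<tau>' \<in> rhodes" using rh_mult_rhodes[OF p t] \<tau>'_def by simp
  have Q: "Qw \<sigma> \<tau> r" using widx_Q[OF s t] r_def by simp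
  have Lr: "eqL (rev \<sigma>' ! r) (rev \<sigma> ! r)" using EV_L[OF p s] Q \<sigma>'_def unfolding Qw_def by simp
  have Lr2: "eqL (rev \<tau>' ! r) (rev \<tau> ! r)" using EV_L[OF p t] Q \<tau>'_def unfolding Qw_def by simp
  have Q': "Qw \<sigma>' \<tau>' r"
    unfolding Qw_def
  proof (intro conjI allI impI)
    show "r < length \<sigma>'" using Q rh_mult_len[OF p s] \<sigma>'_def unfolding Qw_def by simp
    show "r < length \<tau>'" using Q rh_mult_len[OF p t] \<tau>'_def unfolding Qw_def by simp
    fix j assume j: "j < r"
    have jl: "j < length \<sigma> - 1" "j < length \<tau> - 1" using j Q unfolding Qw_def by auto
    have "rev \<sigma>' ! j = rev \<sigma> ! j" unfolding \<sigma>'_def by (rule EV_eq[OF p s jl(1)])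
    moreover have "rev \<tau>' ! j = rev \<tau> ! j" unfolding \<tau>'_def by (rule EV_eq[OF p t jl(2)])
    ultimately show "rev \<sigma>' ! j = rev \<tau>' ! j" using Q j unfolding Qw_def by simp
  next
    show "eqL (rev \<sigma>' ! r) (rev \<tau>' ! r)"
      using Lr Lr2 Q eqL_trans eqL_sym unfolding Qw_def by meson
  qed
  define r' where "r' = widx \<sigma>' \<tau>'"
  have rr: "r \<le> r'" using widx_ge[OF Q'] r'_def by simp
  have Q'': "Qw \<sigma>' \<tau>' r'" using widx_Q[OF s' t'] r'_def by simp
  have w1: "wedgeL \<sigma>' \<tau>' = rev \<sigma>' ! r'" using wedge_widx r'_def by simp
  have w2: "wedgeL \<tau>' \<sigma>' = rev \<tau>' ! r'" using wedge_widx widx_sym r'_def by metis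
  have w3: "wedgeL \<sigma> \<tau> = rev \<sigma> ! r" using wedge_widx r_def by simp
  show ?thesis
  proof (cases "r' = r")
    case True
    then show ?thesis using w1 w2 w3 Lr \<sigma>'_def \<tau>'_def r_def by simp
  next
    case False
    then have lt: "r < r'" using rr by simp
    have eq: "rev \<sigma>' ! r = rev \<tau>' ! r" using Qw_below[OF Q'' lt] by simp
    have "hJ (rev \<sigma>' ! r) < hJ (rev \<sigma>' ! r')"
      using rh_h_strict[OF s' lt] Q'' unfolding Qw_def by simp
    moreover have "hJ (rev \<sigma>' ! r) = hJ (rev \<sigma> ! r)" using hJ_eqL[OF fin Lr] .
    ultimately have "\<not> eqL (rev \<sigma>' ! r') (rev \<sigma> ! r)" using hJ_eqL[OF fin] by fastforce
    then show ?thesis using w1 w3 eq \<sigma>'_def \<tau>'_def r_def by simp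
  qed
qed

lemma Vchar:
  assumes s: "(\<sigma>::'a option list) \<in> rhodes" and t: "\<tau> \<in> rhodes"
  shows "inV \<sigma> \<tau> \<longleftrightarrow> (\<forall>\<rho>\<in>rhodes. eqR (rev (rh_mult \<rho> \<sigma>) ! widx \<sigma> \<tau>) (rev (rh_mult \<rho> \<tau>) ! widx \<sigma> \<tau>))"
  unfolding inV_def using V_rho[OF s t] by blast

lemma Hfun_ne:
  assumes s: "(\<sigma>::'a option list) \<in> rhodes" and t: "\<tau> \<in> rhodes" and ne: "\<sigma> \<noteq> \<tau>"
  shows "Hfun \<sigma> \<tau> = enat (2 * hJ (rev \<sigma> ! widx \<sigma> \<tau>) + (if inV \<sigma> \<tau> then 1 else 0))"
  unfolding Hfun_def VMI_def wedge_widx using s t ne by simp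

lemma char:
  assumes s: "(\<sigma>::'a option list) \<in> rhodes" and t: "\<tau> \<in> rhodes" and ne: "\<sigma> \<noteq> \<tau>"
  shows "enat k \<le> Hfun \<sigma> \<tau> \<longleftrightarrow> (\<exists>r. Good k \<sigma> \<tau> r)"
proof
  define r where "r = widx \<sigma> \<tau>"
  have Q: "Qw \<sigma> \<tau> r" using widx_Q[OF s t] r_def by simp
  assume "enat k \<le> Hfun \<sigma> \<tau>"
  then have k: "k \<le> 2 * hJ (rev \<sigma> ! r) + (if inV \<sigma> \<tau> then 1 else 0)"
    using Hfun_ne[OF s t ne] r_def by simp
  have "Good k \<sigma> \<tau> r"
  proof (cases "inV \<sigma> \<tau>")
    case True
    then have "\<forall>\<rho>\<in>rhodes. eqR (rev (rh_mult \<rho> \<sigma>) ! r) (rev (rh_mult \<rho> \<tau>) ! r)"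
      using Vchar[OF s t] r_def by simp
    then show ?thesis unfolding Good_def using Q k True by simp
  next
    case False
    then show ?thesis unfolding Good_def using Q k by simp
  qed
  then show "\<exists>r. Good k \<sigma> \<tau> r" by blast
next
  define r' where "r' = widx \<sigma> \<tau>"
  have Q': "Qw \<sigma> \<tau> r'" using widx_Q[OF s t] r'_def by simp
  assume "\<exists>r. Good k \<sigma> \<tau> r"
  then obtain r where G: "Good k \<sigma> \<tau> r" by blast
  then have Q: "Qw \<sigma> \<tau> r" unfolding Good_def by simp
  have rr: "r \<le> r'" using widx_ge[OF Q] r'_def by simp
  have "k \<le> 2 * hJ (rev \<sigma> ! r') + (if inV \<sigma> \<tau> then 1 else 0)"
  proof (cases "r = r'")
    case True
    then show ?thesis using G Vchar[OF s t] r'_def unfolding Good_def by auto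
  next
    case False
    then have "hJ (rev \<sigma> ! r) < hJ (rev \<sigma> ! r')"
      using rh_h_strict[OF s, of r r'] rr Q' unfolding Qw_def by simp
    then show ?thesis using G unfolding Good_def by auto
  qed
  then show "enat k \<le> Hfun \<sigma> \<tau>" using Hfun_ne[OF s t ne] r'_def by simp
qed


lemma Gtrans:
  assumes s: "(\<sigma>::'a option list) \<in> rhodes" and t: "\<tau> \<in> rhodes" and u: "\<upsilon> \<in> rhodes"
    and G1: "Good k \<sigma> \<tau> r1" and G2: "Good k \<tau> \<upsilon> r2"
  shows "Good k \<sigma> \<upsilon> (min r1 r2)"
proof -
  have Q1: "Qw \<sigma> \<tau> r1" and Q2: "Qw \<tau> \<upsilon> r2" using G1 G2 unfolding Good_def by auto
  consider "r1 = r2" | "r1 < r2" | "r2 < r1" by linarith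
  then show ?thesis
  proof cases
    case 1
    define r where "r = r1"
    have Q: "Qw \<sigma> \<upsilon> r"
      using Q1 Q2 unfolding Qw_def r_def 1 by (auto intro: eqL_trans)
    have L: "eqL (rev \<sigma> ! r) (rev \<tau> ! r)" using Q1 unfolding Qw_def r_def by simp
    have h: "hJ (rev \<sigma> ! r) = hJ (rev \<tau> ! r)" using hJ_eqL[OF fin L] .
    have b: "k \<le> 2 * hJ (rev \<sigma> ! r) + 1" using G1 unfolding Good_def r_def by simp
    have c: "k \<le> 2 * hJ (rev \<sigma> ! r) \<or>
      (\<forall>\<rho>\<in>rhodes. eqR (rev (rh_mult \<rho> \<sigma>) ! r) (rev (rh_mult \<rho> \<upsilon>) ! r))"
    proof (cases "k \<le> 2 * hJ (rev \<sigma> ! r)")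
      case False
      then have "\<forall>\<rho>\<in>rhodes. eqR (rev (rh_mult \<rho> \<sigma>) ! r) (rev (rh_mult \<rho> \<tau>) ! r)"
        using G1 unfolding Good_def r_def by auto
      moreover have "\<forall>\<rho>\<in>rhodes. eqR (rev (rh_mult \<rho> \<tau>) ! r) (rev (rh_mult \<rho> \<upsilon>) ! r)"
        using G2 False h unfolding Good_def r_def 1 by auto
      ultimately show ?thesis using eqR_trans by blast
    qed simp
    show ?thesis unfolding Good_def using Q b c 1 r_def by simp
  next
    case 2
    have B: "rev \<tau> ! r1 = rev \<upsilon> ! r1 \<and> r1 < length \<tau> - 1 \<and> r1 < length \<upsilon> - 1"
      using Qw_below[OF Q2 2] .
    have Q: "Qw \<sigma> \<upsilon> r1"
      using Q1 Q2 B 2 unfolding Qw_def by auto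
    have c: "k \<le> 2 * hJ (rev \<sigma> ! r1) \<or>
      (\<forall>\<rho>\<in>rhodes. eqR (rev (rh_mult \<rho> \<sigma>) ! r1) (rev (rh_mult \<rho> \<upsilon>) ! r1))"
    proof (cases "k \<le> 2 * hJ (rev \<sigma> ! r1)")
      case False
      then have h: "\<forall>\<rho>\<in>rhodes. eqR (rev (rh_mult \<rho> \<sigma>) ! r1) (rev (rh_mult \<rho> \<tau>) ! r1)"
        using G1 unfolding Good_def by auto
      have "\<forall>\<rho>\<in>rhodes. rev (rh_mult \<rho> \<tau>) ! r1 = rev (rh_mult \<rho> \<upsilon>) ! r1"
        using EV_eq[OF _ t, of _ r1] EV_eq[OF _ u, of _ r1] B by simp
      then show ?thesis using h by simp
    qed simp
    show ?thesis unfolding Good_def using Q c G1 2 unfolding Good_def by simp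
  next
    case 3
    have B: "rev \<sigma> ! r2 = rev \<tau> ! r2 \<and> r2 < length \<sigma> - 1 \<and> r2 < length \<tau> - 1"
      using Qw_below[OF Q1 3] .
    have Q: "Qw \<sigma> \<upsilon> r2"
      using Q1 Q2 B 3 unfolding Qw_def by auto
    have c: "k \<le> 2 * hJ (rev \<sigma> ! r2) \<or>
      (\<forall>\<rho>\<in>rhodes. eqR (rev (rh_mult \<rho> \<sigma>) ! r2) (rev (rh_mult \<rho> \<upsilon>) ! r2))"
    proof (cases "k \<le> 2 * hJ (rev \<sigma> ! r2)")
      case False
      then have h: "\<forall>\<rho>\<in>rhodes. eqR (rev (rh_mult \<rho> \<tau>) ! r2) (rev (rh_mult \<rho> \<upsilon>) ! r2)"
        using G2 B unfolding Good_def by auto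
      have "\<forall>\<rho>\<in>rhodes. rev (rh_mult \<rho> \<sigma>) ! r2 = rev (rh_mult \<rho> \<tau>) ! r2"
        using EV_eq[OF _ s, of _ r2] EV_eq[OF _ t, of _ r2] B by simp
      then show ?thesis using h by simp
    qed simp
    show ?thesis unfolding Good_def using Q c G2 B 3 unfolding Good_def by simp
  qed
qed

end


lemma rev_decomp: "rev \<sigma> = P @ a # X \<Longrightarrow> \<sigma> = rev X @ a # rev P"
  by (metis rev_append rev_rev_ident rev.simps(2) append.assoc append_Cons append_Nil)

lemma sorted_parts:
  assumes s: "\<sigma> \<in> rhodes" and d: "rev \<sigma> = P @ a # X"
  shows "(\<forall>x\<in>set X. ltL x a) \<and> (\<forall>p\<in>set P. ltL a p) \<and> sorted_wrt ltL (rev X)"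
proof -
  have so: "sorted_wrt ltL (rev X @ a # rev P)" using rhodesD[OF s] rev_decomp[OF d] by simp
  then show ?thesis by (simp add: sorted_wrt_append)
qed

lemma decomp:
  assumes s: "\<sigma> \<in> rhodes" and m: "m \<in> rhodes" and d: "rev \<sigma> = P @ a # X"
  shows "rev (rh_mult \<sigma> m) = rev (tl m) @
     rev (Fm (filter (\<lambda>z. \<not> eqL z (mI a (hd m))) (map (\<lambda>z. mI z (hd m)) (rev P)))) @
     rev (Fm (map (\<lambda>z. mI z (hd m)) (rev X) @ [mI a (hd m)]))"
proof -
  define f where "f = (\<lambda>z. mI z (hd m))"
  define U where "U = map f (rev X) @ [f a]"
  define V where "V = map f (rev P)"
  have sp: "(\<forall>x\<in>set X. ltL x a) \<and> (\<forall>p\<in>set P. ltL a p)" using sorted_parts[OF s d] by simp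
  have "map f \<sigma> = U @ V" using rev_decomp[OF d] U_def V_def by simp
  then have "Fm (map f \<sigma>) = Fm U @ Fm (filter (\<lambda>z. \<forall>u\<in>set U. \<not> eqL z u) V)"
    by (simp add: Fm_append)
  also have "filter (\<lambda>z. \<forall>u\<in>set U. \<not> eqL z u) V = filter (\<lambda>z. \<not> eqL z (f a)) V"
  proof (rule filter_cong)
    fix z assume z: "z \<in> set V"
    then obtain p where p: "p \<in> set P" "z = f p" using V_def by auto
    have za: "leL (f a) z" using sp p f_def ltL_leL leL_multr by blast
    have ua: "leL u (f a)" if "u \<in> set U" for u
    proof -
      have "u = f a \<or> (\<exists>x\<in>set X. u = f x)" using that U_def by auto
      then show ?thesis
      proof
        assume "\<exists>x\<in>set X. u = f x"
        then obtain x where x: "x \<in> set X" "u = f x" by blast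
        then have "leL x a" using sp ltL_leL by blast
        then show ?thesis using x f_def leL_multr by simp
      qed simp
    qed
    show "(\<forall>u\<in>set U. \<not> eqL z u) = (\<not> eqL z (f a))"
    proof
      assume "\<forall>u\<in>set U. \<not> eqL z u"
      then show "\<not> eqL z (f a)" using U_def by simp
    next
      assume n: "\<not> eqL z (f a)"
      show "\<forall>u\<in>set U. \<not> eqL z u"
      proof (intro ballI notI)
        fix u assume u: "u \<in> set U" "eqL z u"
        then have "leL z (f a)" using ua[OF u(1)] leL_trans unfolding eqL_def by blast
        then show False using n za unfolding eqL_def by simp
      qed
    qed
  qed simp
  finally have "Fm (map f \<sigma>) = Fm U @ Fm (filter (\<lambda>z. \<not> eqL z (f a)) V)" .
  then show ?thesis using rh_mult_split[OF s m] U_def V_def f_def by simp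
qed

lemma last_Fm_L:
  assumes "sorted_wrt leL U" "U \<noteq> []"
  shows "eqL (last (Fm U)) (last U)"
proof -
  have "last U \<in> set U" using assms(2) by simp
  then have ne: "filter (\<lambda>z. eqL z (last U)) U \<noteq> []" by (auto simp: filter_empty_conv intro: bexI[of _ "last U"])
  then have "hd (filter (\<lambda>z. eqL z (last U)) U) \<in> set (filter (\<lambda>z. eqL z (last U)) U)"
    by (rule list.set_sel(1))
  then show ?thesis using Fm_last[OF assms] by simp
qed


lemma sortedU:
  assumes s: "\<sigma> \<in> rhodes" and d: "rev \<sigma> = P @ a # X"
  shows "sorted_wrt leL (map (\<lambda>z. mI z n) (rev X) @ [mI a n])"
proof -
  have sp: "(\<forall>x\<in>set X. ltL x a) \<and> sorted_wrt ltL (rev X)" using sorted_parts[OF s d] by simp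
  have "sorted_wrt leL (rev X @ [a])"
    using sp by (auto simp: sorted_wrt_append intro: ltL_leL sorted_wrt_mono_rel[of _ ltL])
  then have "sorted_wrt leL (map (\<lambda>z. mI z n) (rev X @ [a]))"
    unfolding sorted_wrt_map by (rule sorted_wrt_mono_rel[rotated]) (simp add: leL_multr)
  then show ?thesis by simp
qed

context
  fixes dummy :: "'a::semigroup_mult itself"
  assumes fin: "J_above_finite TYPE('a)"
begin

lemma eqR_f:
  assumes "eqL (e::'a option) a" "leJ a (mI a n)"
  shows "eqR e (mI e n)"
proof -
  have "leJ e a" using assms(1) unfolding eqL_def by (simp add: leL_leJ)
  moreover have "leJ (mI a n) (mI e n)" using eqL_multr[OF assms(1), of n] unfolding eqL_def by (simp add: leL_leJ)
  ultimately have "leJ e (mI e n)" using assms(2) leJ_trans by blast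
  then have "eqR (mI e n) e" using leR_J_eqR[OF fin leR_self] by blast
  then show ?thesis by (rule eqR_sym)
qed

lemma cong_part:
  assumes s: "(\<sigma>::'a option list) \<in> rhodes" and m: "m \<in> rhodes" and d: "rev \<sigma> = P @ a # X"
    and J: "leJ a (mI a (hd m))"
    and hx: "\<forall>x\<in>set X. hJ (mI a (hd m)) < hJ (mI x (hd m))"
  shows "rev (rh_mult \<sigma> m) ! (length (tl m) + length (Fm (filter (\<lambda>z. \<not> eqL z (mI a (hd m))) (map (\<lambda>z. mI z (hd m)) (rev P))))) = mI a (hd m)"
    and "\<forall>\<rho>\<in>rhodes. rev (rh_mult \<rho> (rh_mult \<sigma> m)) ! (length (tl m) + length (Fm (filter (\<lambda>z. \<not> eqL z (mI a (hd m))) (map (\<lambda>z. mI z (hd m)) (rev P)))))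
        = mI (rev (rh_mult \<rho> \<sigma>) ! length P) (hd m)"
proof -
  define f where "f = (\<lambda>z. mI z (hd m))"
  define C where "C = Fm (filter (\<lambda>z. \<not> eqL z (f a)) (map f (rev P)))"
  define Ux where "Ux = map f (rev X)"
  define s where "s = length (tl m) + length C"
  have U: "Fm (Ux @ [f a]) = Fm Ux @ [f a]"
  proof -
    have "filter (\<lambda>z. \<forall>u\<in>set Ux. \<not> eqL z u) [f a] = [f a]"
    proof -
      have "\<forall>u\<in>set Ux. \<not> eqL (f a) u"
      proof
        fix u assume "u \<in> set Ux"
        then obtain x where x: "x \<in> set X" "u = f x" using Ux_def by auto
        then have "hJ (f a) < hJ u" using hx f_def by simp
        then show "\<not> eqL (f a) u" using hJ_eqL[OF fin] by fastforce
      qed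
      then show ?thesis by simp
    qed
    then show ?thesis by (simp add: Fm_append Fm_cons)
  qed
  have r: "rev (rh_mult \<sigma> m) = (rev (tl m) @ rev C) @ f a # rev (Fm Ux)"
    using decomp[OF s m d] U f_def C_def Ux_def by simp
  have len: "length (rev (tl m) @ rev C) = s" using s_def by simp
  show p1: "rev (rh_mult \<sigma> m) ! (length (tl m) + length (Fm (filter (\<lambda>z. \<not> eqL z (mI a (hd m))) (map (\<lambda>z. mI z (hd m)) (rev P))))) = mI a (hd m)"
    using r len s_def C_def f_def by (simp add: nth_append)
  have pa: "rev (rh_mult \<sigma> m) ! s = f a" using p1 s_def C_def f_def by simp
  have sm: "rh_mult \<sigma> m \<in> rhodes" using rh_mult_rhodes[OF s m] .
  have lsm: "length (rh_mult \<sigma> m) = s + 1 + length (Fm Ux)"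
    using arg_cong[OF r, of length] len by simp
  have ls: "length \<sigma> = length P + 1 + length X" using arg_cong[OF d, of length] by simp
  show "\<forall>\<rho>\<in>rhodes. rev (rh_mult \<rho> (rh_mult \<sigma> m)) ! (length (tl m) + length (Fm (filter (\<lambda>z. \<not> eqL z (mI a (hd m))) (map (\<lambda>z. mI z (hd m)) (rev P)))))
        = mI (rev (rh_mult \<rho> \<sigma>) ! length P) (hd m)"
  proof
    fix \<rho> :: "'a option list" assume p: "\<rho> \<in> rhodes"
    have ss: "s < length (rh_mult \<sigma> m)" using lsm by simp
    have ev1: "rev (rh_mult \<rho> (rh_mult \<sigma> m)) ! s =
      (if s = length (rh_mult \<sigma> m) - 1 then ract \<rho> (hd (rh_mult \<sigma> m)) else rev (rh_mult \<sigma> m) ! s)"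
      using EV[OF p sm ss] .
    have lP: "length P < length \<sigma>" using ls by simp
    have ev2: "rev (rh_mult \<rho> \<sigma>) ! length P =
      (if length P = length \<sigma> - 1 then ract \<rho> (hd \<sigma>) else rev \<sigma> ! length P)"
      using EV[OF p s lP] .
    have "rev (rh_mult \<rho> (rh_mult \<sigma> m)) ! s = f (rev (rh_mult \<rho> \<sigma>) ! length P)"
    proof (cases "X = []")
      case True
      then have Ux: "Ux = []" using Ux_def by simp
      have hs: "hd \<sigma> = a" using rev_decomp[OF d] True by simp
      have hsm: "hd (rh_mult \<sigma> m) = f a"
      proof -
        have "rh_mult \<sigma> m = Fm (map f \<sigma>) @ tl m" using rh_mult_split[OF s m] f_def by simp
        moreover have "\<sigma> \<noteq> []" using rhodesD[OF s] by simp
        ultimately show ?thesis using Fm_hd[of "map f \<sigma>"] hs by (simp add: hd_map)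
      qed
      have "rev (rh_mult \<rho> (rh_mult \<sigma> m)) ! s = ract \<rho> (f a)" using ev1 lsm Ux hsm by simp
      also have "\<dots> = f (ract \<rho> a)" using ract_mult[OF fin p J] f_def by simp
      also have "ract \<rho> a = rev (rh_mult \<rho> \<sigma>) ! length P" using ev2 ls True hs by simp
      finally show ?thesis .
    next
      case False
      then have "Fm Ux \<noteq> []" using Ux_def by simp
      then have "s \<noteq> length (rh_mult \<sigma> m) - 1" using lsm by simp
      then have "rev (rh_mult \<rho> (rh_mult \<sigma> m)) ! s = f a" using ev1 pa by simp
      moreover have "rev (rh_mult \<rho> \<sigma>) ! length P = a" using ev2 ls False d by (simp add: nth_append)
      ultimately show ?thesis by simp
    qed
    then show "rev (rh_mult \<rho> (rh_mult \<sigma> m)) ! (length (tl m) + length (Fm (filter (\<lambda>z. \<not> eqL z (mI a (hd m))) (map (\<lambda>z. mI z (hd m)) (rev P)))))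
        = mI (rev (rh_mult \<rho> \<sigma>) ! length P) (hd m)" using s_def C_def f_def by simp
  qed
qed


lemma Gcong:
  assumes s: "(\<sigma>::'a option list) \<in> rhodes" and t: "\<tau> \<in> rhodes" and m: "m \<in> rhodes"
    and G: "Good k \<sigma> \<tau> r"
  shows "\<exists>s. Good k (rh_mult \<sigma> m) (rh_mult \<tau> m) s"
proof -
  have Q: "Qw \<sigma> \<tau> r" using G unfolding Good_def by simp
  have rs: "r < length \<sigma>" "r < length \<tau>" using Q unfolding Qw_def by auto
  define P where "P = take r (rev \<sigma>)"
  have P2: "take r (rev \<tau>) = P"
    unfolding P_def using Q unfolding Qw_def by (intro nth_equalityI) auto
  define a where "a = rev \<sigma> ! r"
  define b where "b = rev \<tau> ! r"
  define Xa where "Xa = drop (Suc r) (rev \<sigma>)"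
  define Xb where "Xb = drop (Suc r) (rev \<tau>)"
  have da: "rev \<sigma> = P @ a # Xa" unfolding P_def a_def Xa_def using rs(1) by (simp add: id_take_nth_drop)
  have db: "rev \<tau> = P @ b # Xb" unfolding P2[symmetric] b_def Xb_def using rs(2) by (simp add: id_take_nth_drop)
  have lP: "length P = r" unfolding P_def using rs(1) by simp
  have ab: "eqL a b" using Q unfolding Qw_def a_def b_def by simp
  define f where "f = (\<lambda>z. mI z (hd m))"
  have fab: "eqL (f a) (f b)" using eqL_multr[OF ab] f_def by simp
  define C where "C = Fm (filter (\<lambda>z. \<not> eqL z (f a)) (map f (rev P)))"
  have C2: "Fm (filter (\<lambda>z. \<not> eqL z (f b)) (map f (rev P))) = C"
  proof -
    have "filter (\<lambda>z. \<not> eqL z (f b)) (map f (rev P)) = filter (\<lambda>z. \<not> eqL z (f a)) (map f (rev P))"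
    proof (rule filter_cong)
      fix z
      show "(\<not> eqL z (f b)) = (\<not> eqL z (f a))"
        using eqL_trans[of z "f b" "f a"] eqL_trans[of z "f a" "f b"] fab eqL_sym[OF fab] by blast
    qed simp
    then show ?thesis using C_def by simp
  qed
  define Ua where "Ua = map f (rev Xa) @ [f a]"
  define Ub where "Ub = map f (rev Xb) @ [f b]"
  have ra: "rev (rh_mult \<sigma> m) = (rev (tl m) @ rev C) @ rev (Fm Ua)"
    using decomp[OF s m da] C_def Ua_def f_def by simp
  have rb: "rev (rh_mult \<tau> m) = (rev (tl m) @ rev C) @ rev (Fm Ub)"
    using decomp[OF t m db] C2 Ub_def f_def by simp
  define sx where "sx = length (rev (tl m) @ rev C)"
  have Uane: "Fm Ua \<noteq> []" "Fm Ub \<noteq> []" using Ua_def Ub_def by auto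
  define a' where "a' = last (Fm Ua)"
  define b' where "b' = last (Fm Ub)"
  have a'i: "rev (rh_mult \<sigma> m) ! sx = a'"
    using ra Uane a'_def sx_def by (simp add: nth_append rev_nth0)
  have b'i: "rev (rh_mult \<tau> m) ! sx = b'"
    using rb Uane b'_def sx_def by (simp add: nth_append rev_nth0)
  have a'L: "eqL a' (f a)" using last_Fm_L[OF sortedU[OF s da]] a'_def Ua_def f_def by simp
  have b'L: "eqL b' (f b)" using last_Fm_L[OF sortedU[OF t db]] b'_def Ub_def f_def by simp
  have Q': "Qw (rh_mult \<sigma> m) (rh_mult \<tau> m) sx"
    unfolding Qw_def
  proof (intro conjI allI impI)
    show "sx < length (rh_mult \<sigma> m)" using arg_cong[OF ra, of length] Uane sx_def by simp
    show "sx < length (rh_mult \<tau> m)" using arg_cong[OF rb, of length] Uane sx_def by simp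
    fix j assume "j < sx"
    then show "rev (rh_mult \<sigma> m) ! j = rev (rh_mult \<tau> m) ! j" using ra rb sx_def
      by (simp only: nth_append) simp
  next
    show "eqL (rev (rh_mult \<sigma> m) ! sx) (rev (rh_mult \<tau> m) ! sx)"
    proof -
      have "eqL a' (f b)" by (rule eqL_trans[OF a'L fab])
      then have "eqL a' b'" using eqL_trans eqL_sym[OF b'L] by blast
      then show ?thesis using a'i b'i by simp
    qed
  qed
  have ha': "hJ a' = hJ (f a)" using hJ_eqL[OF fin a'L] .
  have hfa: "hJ a \<le> hJ (f a)" using hJ_multr[OF fin] f_def by simp
  have G2: "k \<le> 2 * hJ a + 1" using G unfolding Good_def a_def by simp
  have third: "k \<le> 2 * hJ a' \<or>
      (\<forall>\<rho>\<in>rhodes. eqR (rev (rh_mult \<rho> (rh_mult \<sigma> m)) ! sx) (rev (rh_mult \<rho> (rh_mult \<tau> m)) ! sx))"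
  proof (cases "k \<le> 2 * hJ a \<or> hJ a < hJ (f a)")
    case True
    then show ?thesis using ha' hfa G2 by auto
  next
    case False
    then have kk: "\<not> k \<le> 2 * hJ a" and heq: "hJ (f a) = hJ a" using hfa by auto
    have allR: "\<forall>\<rho>\<in>rhodes. eqR (rev (rh_mult \<rho> \<sigma>) ! r) (rev (rh_mult \<rho> \<tau>) ! r)"
      using G kk unfolding Good_def a_def by auto
    have Ja: "leJ a (f a)" using hJ_eq_leJ[OF fin leJ_selfr] heq f_def by simp
    have hb: "hJ b = hJ a" using hJ_eqL[OF fin ab] by simp
    have hfb: "hJ (f b) = hJ a" using hJ_eqL[OF fin fab] heq by simp
    have Jb: "leJ b (f b)" using hJ_eq_leJ[OF fin leJ_selfr] hfb hb f_def by simp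
    have hxa: "\<forall>x\<in>set Xa. hJ (f a) < hJ (f x)"
    proof
      fix x assume "x \<in> set Xa"
      then have "ltL x a" using sorted_parts[OF s da] by simp
      then have "hJ a < hJ x" using hJ_lt[OF fin] ltL_ltJ[OF fin] by blast
      then show "hJ (f a) < hJ (f x)" using heq hJ_multr[OF fin, of x "hd m"] f_def by simp
    qed
    have hxb: "\<forall>x\<in>set Xb. hJ (f b) < hJ (f x)"
    proof
      fix x assume "x \<in> set Xb"
      then have "ltL x b" using sorted_parts[OF t db] by simp
      then have "hJ b < hJ x" using hJ_lt[OF fin] ltL_ltJ[OF fin] by blast
      then show "hJ (f b) < hJ (f x)" using hfb hb hJ_multr[OF fin, of x "hd m"] f_def by simp
    qed
    have sxC: "sx = length (tl m) + length C" using sx_def by simp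
    have cpa: "\<forall>\<rho>\<in>rhodes. rev (rh_mult \<rho> (rh_mult \<sigma> m)) ! sx = f (rev (rh_mult \<rho> \<sigma>) ! r)"
      using cong_part(2)[OF s m da] Ja hxa f_def sxC C_def lP by simp
    have cpb: "\<forall>\<rho>\<in>rhodes. rev (rh_mult \<rho> (rh_mult \<tau> m)) ! sx = f (rev (rh_mult \<rho> \<tau>) ! r)"
      using cong_part(2)[OF t m db] Jb hxb f_def sxC C2 lP by simp
    have "\<forall>\<rho>\<in>rhodes. eqR (rev (rh_mult \<rho> (rh_mult \<sigma> m)) ! sx) (rev (rh_mult \<rho> (rh_mult \<tau> m)) ! sx)"
    proof
      fix \<rho> :: "'a option list" assume p: "\<rho> \<in> rhodes"
      define ea where "ea = rev (rh_mult \<rho> \<sigma>) ! r"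
      define eb where "eb = rev (rh_mult \<rho> \<tau>) ! r"
      have R: "eqR ea eb" using allR p ea_def eb_def by simp
      have La: "eqL ea a" using EV_L[OF p s rs(1)] ea_def a_def by simp
      have Lb: "eqL eb a" using EV_L[OF p t rs(2)] eb_def b_def ab eqL_sym eqL_trans by blast
      have "eqR ea (f ea)" using eqR_f[OF La] Ja f_def by simp
      moreover have "eqR eb (f eb)" using eqR_f[OF Lb] Ja f_def by simp
      ultimately have "eqR (f ea) (f eb)" using R eqR_sym eqR_trans by blast
      then show "eqR (rev (rh_mult \<rho> (rh_mult \<sigma> m)) ! sx) (rev (rh_mult \<rho> (rh_mult \<tau> m)) ! sx)"
        using cpa cpb p ea_def eb_def by simp
    qed
    then show ?thesis by simp
  qed
  have "Good k (rh_mult \<sigma> m) (rh_mult \<tau> m) sx"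
    unfolding Good_def using Q' a'i third ha' hfa G2 by simp
  then show ?thesis by blast
qed


lemma Hfun_sym:
  assumes s: "(\<sigma>::'a option list) \<in> rhodes" and t: "\<tau> \<in> rhodes"
  shows "Hfun \<sigma> \<tau> = Hfun \<tau> \<sigma>"
proof (cases "\<sigma> = \<tau>")
  case True then show ?thesis by simp
next
  case False
  then have F2: "\<tau> \<noteq> \<sigma>" by simp
  define r where "r = widx \<sigma> \<tau>"
  have r2: "widx \<tau> \<sigma> = r" using widx_sym[of \<tau> \<sigma>] r_def by simp
  have "eqL (rev \<sigma> ! r) (rev \<tau> ! r)" using widx_Q[OF s t] r_def unfolding Qw_def by simp
  then have h: "hJ (rev \<sigma> ! r) = hJ (rev \<tau> ! r)" by (rule hJ_eqL[OF fin])
  have v1: "inV \<sigma> \<tau> = (\<forall>\<rho>\<in>rhodes. eqR (rev (rh_mult \<rho> \<sigma>) ! r) (rev (rh_mult \<rho> \<tau>) ! r))"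
    using Vchar[OF fin s t] r_def by simp
  have v2: "inV \<tau> \<sigma> = (\<forall>\<rho>\<in>rhodes. eqR (rev (rh_mult \<rho> \<tau>) ! r) (rev (rh_mult \<rho> \<sigma>) ! r))"
    using Vchar[OF fin t s] r2 by simp
  have v: "inV \<sigma> \<tau> = inV \<tau> \<sigma>" unfolding v1 v2 using eqR_sym by blast
  have H1: "Hfun \<sigma> \<tau> = enat (2 * hJ (rev \<sigma> ! r) + (if inV \<sigma> \<tau> then 1 else 0))"
    using Hfun_ne[OF fin s t False] r_def by simp
  have H2: "Hfun \<tau> \<sigma> = enat (2 * hJ (rev \<tau> ! r) + (if inV \<tau> \<sigma> then 1 else 0))"
    using Hfun_ne[OF fin t s F2] r2 by simp
  show ?thesis unfolding H1 H2 h v ..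
qed

end

lemma Hfun_lt:
  assumes "(\<sigma>::'a::semigroup_mult option list) \<noteq> \<tau>"
  shows "Hfun \<sigma> \<tau> < Hfun (\<rho>::'a option list) \<rho> \<and> (\<exists>k. Hfun \<sigma> \<tau> = enat k)"
proof -
  define S where "S = (SUP m::'a option. enat (hJ m))"
  define w where "w = wedgeL \<sigma> \<tau>"
  have hw: "enat (hJ w) \<le> S" unfolding S_def by (rule SUP_upper) simp
  obtain c where c: "c \<le> 1" "Hfun \<sigma> \<tau> = enat (2 * hJ w + c)"
    using assms unfolding Hfun_def w_def by (cases "(\<sigma>, \<tau>) \<in> VMI") (auto intro: exI[of _ 1] exI[of _ 0])
  have d: "Hfun \<rho> \<rho> = 2 * S + 2" unfolding Hfun_def S_def by simp
  have "enat (2 * hJ w + c) < 2 * S + 2"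
  proof (cases S)
    case (enat s)
    then have "hJ w \<le> s" using hw by simp
    then show ?thesis using enat c(1) by (simp add: numeral_eq_enat one_enat_def)
  next
    case infinity
    then show ?thesis by (simp add: numeral_eq_enat)
  qed
  then show ?thesis using c d by simp
qed

lemma Hfun_diag: "Hfun (\<sigma>::'a::semigroup_mult option list) \<sigma> = Hfun (\<tau>::'a option list) \<tau>"
  unfolding Hfun_def by simp

context
  fixes dummy :: "'a::semigroup_mult itself"
  assumes fin: "J_above_finite TYPE('a)"
begin

lemma part1: "strict_length_function (rhodes :: 'a option list set) rh_mult Hfun"
  unfolding strict_length_function_def length_function_def
proof (intro conjI ballI impI)
  fix m m' m'' :: "'a option list"
  assume m: "m \<in> rhodes" and m': "m' \<in> rhodes" and m'': "m'' \<in> rhodes"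
  show "Hfun m m' = Hfun m' m" by (rule Hfun_sym[OF fin m m'])
  show le: "Hfun m' m'' \<le> Hfun m m"
    using Hfun_lt[of m' m'' m] Hfun_diag[of m' m] by (cases "m' = m''") auto
  show "Hfun m' m'' \<le> Hfun (rh_mult m' m) (rh_mult m'' m)"
  proof (cases "m' = m'' \<or> rh_mult m' m = rh_mult m'' m")
    case True
    then show ?thesis using le Hfun_diag[of "rh_mult m' m" m] by auto
  next
    case False
    then have ne: "m' \<noteq> m''" "rh_mult m' m \<noteq> rh_mult m'' m" by auto
    obtain k where k: "Hfun m' m'' = enat k" using Hfun_lt[OF ne(1)] by blast
    then obtain r where "Good k m' m'' r" using char[OF fin m' m'' ne(1)] by auto
    then obtain s where "Good k (rh_mult m' m) (rh_mult m'' m) s" using Gcong[OF fin m' m'' m] by blast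
    then have "enat k \<le> Hfun (rh_mult m' m) (rh_mult m'' m)"
      using char[OF fin rh_mult_rhodes[OF m' m] rh_mult_rhodes[OF m'' m] ne(2)] by blast
    then show ?thesis using k by simp
  qed
  show "min (Hfun m m') (Hfun m' m'') \<le> Hfun m m''"
  proof (cases "m = m' \<or> m' = m'' \<or> m = m''")
    case True
    moreover have "Hfun m m' \<le> Hfun m m" using Hfun_lt[of m m' m] by (cases "m = m'") auto
    ultimately show ?thesis by (auto simp: min_le_iff_disj)
  next
    case False
    then have ne: "m \<noteq> m'" "m' \<noteq> m''" "m \<noteq> m''" by auto
    obtain k1 where k1: "Hfun m m' = enat k1" using Hfun_lt[OF ne(1)] by blast
    obtain k2 where k2: "Hfun m' m'' = enat k2" using Hfun_lt[OF ne(2)] by blast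
    define k where "k = min k1 k2"
    have "enat k \<le> Hfun m m'" using k1 k_def by simp
    then obtain r1 where r1: "Good k m m' r1" using char[OF fin m m' ne(1)] by auto
    have "enat k \<le> Hfun m' m''" using k2 k_def by simp
    then obtain r2 where r2: "Good k m' m'' r2" using char[OF fin m' m'' ne(2)] by auto
    have "Good k m m'' (min r1 r2)" by (rule Gtrans[OF fin m m' m'' r1 r2])
    then have "enat k \<le> Hfun m m''" using char[OF fin m m'' ne(3)] by blast
    moreover have "min (Hfun m m') (Hfun m' m'') = enat k" using k1 k2 k_def by simp
    ultimately show ?thesis by simp
  qed
next
  fix m m' m'' :: "'a option list"
  assume "m \<in> rhodes" "m' \<in> rhodes" "m'' \<in> rhodes" and e: "Hfun m' m'' = Hfun m m"
  show "m' = m''"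
  proof (rule ccontr)
    assume "m' \<noteq> m''"
    then have "Hfun m' m'' < Hfun m m" using Hfun_lt by blast
    then show False using e by simp
  qed
qed

end


lemma enat_inf_all: "(\<And>i. enat i \<le> x) \<Longrightarrow> x = \<infinity>"
proof (cases x)
  case (enat n)
  assume h: "\<And>i. enat i \<le> x"
  then have "enat (Suc n) \<le> enat n" using enat by simp
  then show ?thesis by simp
qed simp

lemma Sup_enat_le: "Sup {enat i | i. enat i \<le> x} = x"
proof (rule antisym)
  show "Sup {enat i | i. enat i \<le> x} \<le> x" by (rule Sup_least) auto
next
  show "x \<le> Sup {enat i | i. enat i \<le> x}"
  proof (cases x)
    case (enat n)
    then show ?thesis by (intro Sup_upper) auto
  next
    case infinity
    have "enat i \<le> Sup {enat i | i. enat i \<le> x}" for i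
      using infinity by (intro Sup_upper) auto
    then have "Sup {enat i | i. enat i \<le> x} = \<infinity>"
      by (rule enat_inf_all)
    then show ?thesis using infinity by simp
  qed
qed

lemma enat_all_le: "(\<And>i. enat i \<le> N \<Longrightarrow> enat i \<le> x) \<Longrightarrow> x \<le> N \<Longrightarrow> x = N"
proof -
  assume h: "\<And>i. enat i \<le> N \<Longrightarrow> enat i \<le> x" and xN: "x \<le> N"
  show "x = N"
  proof (cases N)
    case (enat n) then show ?thesis using h[of n] xN by simp
  next
    case infinity
    then have "\<And>i. enat i \<le> x" using h by simp
    then have "x = \<infinity>" by (rule enat_inf_all)
    then show ?thesis using infinity by simp
  qed
qed

context
  fixes S :: "'s set" and f :: "'s \<Rightarrow> 's \<Rightarrow> 's" and D :: "'s \<Rightarrow> 's \<Rightarrow> enat"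
  assumes slf: "strict_length_function S f D"
begin

lemma LFH: "m \<in> S \<Longrightarrow> m' \<in> S \<Longrightarrow> m'' \<in> S \<Longrightarrow>
      D m m' = D m' m \<and> D m' m'' \<le> D m m \<and> D m' m'' \<le> D (f m' m) (f m'' m) \<and>
      min (D m m') (D m' m'') \<le> D m m''"
proof -
  assume a: "m \<in> S" "m' \<in> S" "m'' \<in> S"
  have "length_function S f D" using slf unfolding strict_length_function_def by simp
  then show ?thesis unfolding length_function_def using a by simp
qed

lemma LF_sym: "a \<in> S \<Longrightarrow> b \<in> S \<Longrightarrow> D a b = D b a"
  using LFH[of a b b] by simp

lemma LF_le: "a \<in> S \<Longrightarrow> b \<in> S \<Longrightarrow> c \<in> S \<Longrightarrow> D a b \<le> D c c"
  using LFH[of c a b] by simp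

lemma LF_diag: "a \<in> S \<Longrightarrow> c \<in> S \<Longrightarrow> D a a = D c c"
  using LF_le[of a a c] LF_le[of c c a] by simp

lemma LF_trans: "a \<in> S \<Longrightarrow> b \<in> S \<Longrightarrow> c \<in> S \<Longrightarrow> x \<le> D a b \<Longrightarrow> x \<le> D b c \<Longrightarrow> x \<le> D a c"
proof -
  assume a: "a \<in> S" "b \<in> S" "c \<in> S" "x \<le> D a b" "x \<le> D b c"
  have "min (D a b) (D b c) \<le> D a c" using LFH[OF a(1-3)] by blast
  moreover have "x \<le> min (D a b) (D b c)" using a(4,5) by simp
  ultimately show ?thesis by (rule order_trans[rotated])
qed

lemma LF_cong: "a \<in> S \<Longrightarrow> b \<in> S \<Longrightarrow> m \<in> S \<Longrightarrow> x \<le> D a b \<Longrightarrow> x \<le> D (f a m) (f b m)"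
proof -
  assume a: "a \<in> S" "b \<in> S" "m \<in> S" "x \<le> D a b"
  have "D a b \<le> D (f a m) (f b m)" using LFH[OF a(3) a(1) a(2)] by simp
  then show ?thesis using a(4) by simp
qed

lemma LF_strict: "a \<in> S \<Longrightarrow> b \<in> S \<Longrightarrow> c \<in> S \<Longrightarrow> D a b = D c c \<Longrightarrow> a = b"
proof -
  assume a: "a \<in> S" "b \<in> S" "c \<in> S" "D a b = D c c"
  have "\<forall>m\<in>S. \<forall>m'\<in>S. \<forall>m''\<in>S. D m' m'' = D m m \<longrightarrow> m' = m''"
    using slf unfolding strict_length_function_def by simp
  then show ?thesis using a by blast
qed

end


definition cls :: "'s set \<Rightarrow> ('s \<Rightarrow> 's \<Rightarrow> enat) \<Rightarrow> nat \<Rightarrow> 's \<Rightarrow> 's set" where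
  "cls S D i s = {s' \<in> S. enat i \<le> D s s'}"

definition mkT :: "'s set \<Rightarrow> ('s \<Rightarrow> 's \<Rightarrow> 's) \<Rightarrow> ('s \<Rightarrow> 's \<Rightarrow> enat) \<Rightarrow> 's \<Rightarrow> (nat \<times> 's set, 's) stree" where
  "mkT S f D e = \<lparr>Vt = {(i, cls S D i s) | i s. enat i \<le> D e e \<and> s \<in> S}, rt = (0, S),
     par = (\<lambda>(i, C). (i - 1, cls S D (i - 1) (SOME c. c \<in> C))),
     ray = (\<lambda>i. (i, cls S D i e)), rlen = D e e,
     act = (\<lambda>(i, C) s. (i, cls S D i (f (SOME c. c \<in> C) s)))\<rparr>"

context
  fixes S :: "'s set" and f :: "'s \<Rightarrow> 's \<Rightarrow> 's" and D :: "'s \<Rightarrow> 's \<Rightarrow> enat" and e :: 's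
  assumes slf: "strict_length_function S f D"
    and eS: "e \<in> S" and cl: "\<And>a b. a \<in> S \<Longrightarrow> b \<in> S \<Longrightarrow> f a b \<in> S"
    and asc: "\<And>a b c. a \<in> S \<Longrightarrow> b \<in> S \<Longrightarrow> c \<in> S \<Longrightarrow> f (f a b) c = f a (f b c)"
    and lu: "\<And>a. a \<in> S \<Longrightarrow> f e a = a" and ru: "\<And>a. a \<in> S \<Longrightarrow> f a e = a"
begin

abbreviation "NN \<equiv> D e e"

lemma enat_le_sub: "enat i \<le> M \<Longrightarrow> enat (i - n) \<le> M"
  by (rule order_trans[of _ "enat i"]) simp_all
abbreviation "TT \<equiv> mkT S f D e"

lemma Ddiag: "a \<in> S \<Longrightarrow> D a a = NN" using LF_diag[OF slf _ eS] by simp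
lemma DleN: "a \<in> S \<Longrightarrow> b \<in> S \<Longrightarrow> D a b \<le> NN" using LF_le[OF slf _ _ eS] by simp

lemma cls_mem: "s \<in> S \<Longrightarrow> enat i \<le> NN \<Longrightarrow> s \<in> cls S D i s"
  unfolding cls_def using Ddiag by simp

lemma cls_eq: "s \<in> S \<Longrightarrow> s' \<in> S \<Longrightarrow> enat i \<le> NN \<Longrightarrow> cls S D i s = cls S D i s' \<longleftrightarrow> enat i \<le> D s s'"
proof
  assume a: "s \<in> S" "s' \<in> S" "enat i \<le> NN" "cls S D i s = cls S D i s'"
  then have "s' \<in> cls S D i s" using cls_mem by simp
  then show "enat i \<le> D s s'" unfolding cls_def by simp
next
  assume a: "s \<in> S" "s' \<in> S" "enat i \<le> NN" "enat i \<le> D s s'"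
  show "cls S D i s = cls S D i s'"
    unfolding cls_def
  proof (intro Collect_cong conj_cong refl)
    fix x assume x: "x \<in> S"
    show "(enat i \<le> D s x) = (enat i \<le> D s' x)"
    proof
      assume "enat i \<le> D s x"
      moreover have "enat i \<le> D s' s" using a LF_sym[OF slf] by simp
      ultimately show "enat i \<le> D s' x" using LF_trans[OF slf a(2) a(1) x] by simp
    next
      assume "enat i \<le> D s' x"
      then show "enat i \<le> D s x" using LF_trans[OF slf a(1) a(2) x] a(4) by simp
    qed
  qed
qed

lemma cls0: "cls S D 0 s = S" unfolding cls_def by (simp add: zero_enat_def[symmetric])

lemma some_cls:
  assumes "s \<in> S" "enat i \<le> NN"
  shows "(SOME c. c \<in> cls S D i s) \<in> S \<and> cls S D i (SOME c. c \<in> cls S D i s) = cls S D i s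
         \<and> enat i \<le> D s (SOME c. c \<in> cls S D i s)"
proof -
  have "s \<in> cls S D i s" using cls_mem assms by simp
  then have c: "(SOME c. c \<in> cls S D i s) \<in> cls S D i s" by (rule someI)
  then have cS: "(SOME c. c \<in> cls S D i s) \<in> S" and le: "enat i \<le> D s (SOME c. c \<in> cls S D i s)"
    unfolding cls_def by auto
  then show ?thesis using cls_eq[OF assms(1) cS assms(2)] by simp
qed

lemma T_simps: "Vt TT = {(i, cls S D i s) | i s. enat i \<le> NN \<and> s \<in> S}" "rt TT = (0, S)"
  "ray TT i = (i, cls S D i e)" "rlen TT = NN"
  by (simp_all add: mkT_def)

lemma T_par: "s \<in> S \<Longrightarrow> enat i \<le> NN \<Longrightarrow> par TT (i, cls S D i s) = (i - 1, cls S D (i - 1) s)"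
proof -
  assume a: "s \<in> S" "enat i \<le> NN"
  define c where "c = (SOME c. c \<in> cls S D i s)"
  have c: "c \<in> S" "enat i \<le> D s c" using some_cls[OF a] c_def by auto
  have i1: "enat (i - 1) \<le> NN" using a(2) by (rule enat_le_sub)
  have "enat (i - 1) \<le> D s c" using c(2) by (rule enat_le_sub)
  then have "cls S D (i - 1) c = cls S D (i - 1) s" using cls_eq[OF a(1) c(1) i1] by simp
  then show ?thesis by (simp add: mkT_def c_def)
qed

lemma T_act: "s \<in> S \<Longrightarrow> t \<in> S \<Longrightarrow> enat i \<le> NN \<Longrightarrow> act TT (i, cls S D i s) t = (i, cls S D i (f s t))"
proof -
  assume a: "s \<in> S" "t \<in> S" "enat i \<le> NN"
  define c where "c = (SOME c. c \<in> cls S D i s)"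
  have c: "c \<in> S" "enat i \<le> D s c" using some_cls[OF a(1,3)] c_def by auto
  have "enat i \<le> D (f s t) (f c t)" using LF_cong[OF slf a(1) c(1) a(2) c(2)] .
  then have "cls S D i (f c t) = cls S D i (f s t)"
    using cls_eq[OF cl[OF a(1,2)] cl[OF c(1) a(2)] a(3)] by simp
  then show ?thesis by (simp add: mkT_def c_def)
qed

lemma T_parpow: "s \<in> S \<Longrightarrow> enat i \<le> NN \<Longrightarrow> n \<le> i \<Longrightarrow> (par TT ^^ n) (i, cls S D i s) = (i - n, cls S D (i - n) s)"
proof (induction n)
  case 0 then show ?case by simp
next
  case (Suc n)
  have "enat (i - n) \<le> NN" using Suc.prems(2) by (rule enat_le_sub)
  then have "par TT (i - n, cls S D (i - n) s) = (i - n - 1, cls S D (i - n - 1) s)"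
    using T_par Suc.prems(1) by blast
  then show ?case using Suc by simp
qed

lemma T_rt: "(0, cls S D 0 s) = rt TT" using T_simps cls0 by simp

lemma T_depth: "s \<in> S \<Longrightarrow> enat i \<le> NN \<Longrightarrow> depth TT (i, cls S D i s) = i"
  unfolding depth_def
proof (rule Least_equality)
  assume a: "s \<in> S" "enat i \<le> NN"
  show "(par TT ^^ i) (i, cls S D i s) = rt TT" using T_parpow[OF a] T_rt by simp
  fix n assume n: "(par TT ^^ n) (i, cls S D i s) = rt TT"
  show "i \<le> n"
  proof (rule ccontr)
    assume "\<not> i \<le> n"
    then have "(par TT ^^ n) (i, cls S D i s) = (i - n, cls S D (i - n) s)" using T_parpow[OF a] by simp
    then show False using n \<open>\<not> i \<le> n\<close> T_simps by simp
  qed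
qed

lemma T_Vt_iff: "v \<in> Vt TT \<longleftrightarrow> (\<exists>i s. v = (i, cls S D i s) \<and> enat i \<le> NN \<and> s \<in> S)"
  using T_simps by auto

lemma T_rt_Vt: "rt TT \<in> Vt TT" using T_Vt_iff T_rt eS by (metis zero_enat_def zero_le)

lemma T_not_rt: "v = (i, cls S D i s) \<Longrightarrow> v \<noteq> rt TT \<Longrightarrow> i \<noteq> 0"
proof
  assume "v = (i, cls S D i s)" "v \<noteq> rt TT" "i = 0"
  then show False using T_rt[of s] by simp
qed

lemma T_rooted: "rooted_tree TT"
  unfolding rooted_tree_def
proof (intro conjI ballI impI)
  show "rt TT \<in> Vt TT" by (rule T_rt_Vt)
  fix v assume v: "v \<in> Vt TT"
  then obtain i s where isx: "v = (i, cls S D i s)" "enat i \<le> NN" "s \<in> S" using T_Vt_iff by auto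
  show "\<exists>n. (par TT ^^ n) v = rt TT" using T_parpow[OF isx(3) isx(2), of i] isx(1) T_rt by auto
  assume "v \<noteq> rt TT"
  have "enat (i - 1) \<le> NN" using isx(2) by (rule enat_le_sub)
  then show "par TT v \<in> Vt TT" using T_par[OF isx(3) isx(2)] isx T_Vt_iff by auto
qed


lemma T_ray_max: "is_max_ray TT (ray TT) (rlen TT)"
  unfolding is_max_ray_def is_ray_def
proof (intro conjI allI impI)
  show "ray TT 0 = rt TT" using T_simps T_rt[of e] by simp
  fix i
  show "enat i \<le> rlen TT \<Longrightarrow> ray TT i \<in> Vt TT" using T_simps eS by auto
  assume h: "enat (Suc i) \<le> rlen TT"
  show "ray TT (Suc i) \<noteq> rt TT" using T_simps by simp
  show "par TT (ray TT (Suc i)) = ray TT i" using T_par[OF eS] h T_simps by simp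
next
  fix n assume n: "rlen TT = enat n"
  show "\<not> (\<exists>w\<in>Vt TT. w \<noteq> rt TT \<and> par TT w = ray TT n)"
  proof
    assume "\<exists>w\<in>Vt TT. w \<noteq> rt TT \<and> par TT w = ray TT n"
    then obtain w where w: "w \<in> Vt TT" "w \<noteq> rt TT" "par TT w = ray TT n" by blast
    then obtain j s where js: "w = (j, cls S D j s)" "enat j \<le> NN" "s \<in> S" using T_Vt_iff by auto
    have "j \<noteq> 0" using T_not_rt[OF js(1) w(2)] .
    moreover have "par TT w = (j - 1, cls S D (j - 1) s)" using T_par[OF js(3) js(2)] js(1) by simp
    ultimately have "j = Suc n" using w(3) T_simps by simp
    then show False using js(2) n T_simps by simp
  qed
qed

lemma T_ray_fst:
  assumes r: "is_ray TT \<beta> l" and i: "enat i \<le> l"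
  shows "fst (\<beta> i) = i"
  using i
proof (induction i)
  case 0 then show ?case using r T_simps unfolding is_ray_def by simp
next
  case (Suc i)
  have "\<beta> (Suc i) \<in> Vt TT" using r Suc.prems unfolding is_ray_def by blast
  then obtain j s where js: "\<beta> (Suc i) = (j, cls S D j s)" "enat j \<le> NN" "s \<in> S" using T_Vt_iff by auto
  have nr: "\<beta> (Suc i) \<noteq> rt TT" and p: "par TT (\<beta> (Suc i)) = \<beta> i" using r Suc.prems unfolding is_ray_def by auto
  have "j \<noteq> 0" using T_not_rt[OF js(1) nr] .
  moreover have "enat i \<le> l" by (rule order_trans[OF _ Suc.prems]) simp
  then have "fst (\<beta> i) = i" using Suc.IH by simp
  moreover have "par TT (\<beta> (Suc i)) = (j - 1, cls S D (j - 1) s)" using T_par[OF js(3) js(2)] js(1) by simp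
  ultimately have "j - 1 = i" using p js(1) by (metis fst_conv)
  then show ?case using js(1) \<open>j \<noteq> 0\<close> by simp
qed

lemma T_max_ray_len:
  assumes m: "is_max_ray TT \<beta> l"
  shows "l = NN"
proof -
  have r: "is_ray TT \<beta> l" using m unfolding is_max_ray_def by simp
  have le: "enat i \<le> NN" if "enat i \<le> l" for i
  proof -
    have "\<beta> i \<in> Vt TT" using r that unfolding is_ray_def by blast
    then obtain j s where js: "\<beta> i = (j, cls S D j s)" "enat j \<le> NN" "s \<in> S" using T_Vt_iff by auto
    then show ?thesis using T_ray_fst[OF r that] by simp
  qed
  show ?thesis
  proof (cases l)
    case infinity
    then have "\<And>i. enat i \<le> NN" using le by simp
    then show ?thesis using infinity enat_inf_all by metis
  next
    case (enat n)
    have nN: "enat n \<le> NN" using le enat by simp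
    show ?thesis
    proof (rule ccontr)
      assume "l \<noteq> NN"
      then have "enat (Suc n) \<le> NN" using nN enat by (cases NN) auto
      have "\<beta> n \<in> Vt TT" using r enat unfolding is_ray_def by simp
      then obtain j s where js: "\<beta> n = (j, cls S D j s)" "enat j \<le> NN" "s \<in> S" using T_Vt_iff by auto
      have jn: "j = n" using T_ray_fst[OF r, of n] enat js(1) by simp
      define w where "w = (Suc n, cls S D (Suc n) s)"
      have "w \<in> Vt TT" using w_def \<open>enat (Suc n) \<le> NN\<close> js(3) T_Vt_iff by auto
      moreover have "w \<noteq> rt TT" using w_def T_simps by simp
      moreover have "par TT w = \<beta> n" using T_par[OF js(3) \<open>enat (Suc n) \<le> NN\<close>] w_def js(1) jn by simp
      ultimately show False using m enat unfolding is_max_ray_def by blast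
    qed
  qed
qed

lemma T_uniform: "uniform_tree TT"
  unfolding uniform_tree_def using T_max_ray_len by metis

lemma T_tdist:
  assumes v: "v \<in> Vt TT" and w: "w \<in> Vt TT" and t: "t \<in> S"
  shows "tdist TT (act TT v t) (act TT w t) \<le> tdist TT v w"
proof -
  obtain i a where ia: "v = (i, cls S D i a)" "enat i \<le> NN" "a \<in> S" using v T_Vt_iff by auto
  obtain j b where jb: "w = (j, cls S D j b)" "enat j \<le> NN" "b \<in> S" using w T_Vt_iff by auto
  have av: "act TT v t = (i, cls S D i (f a t))" using T_act[OF ia(3) t ia(2)] ia(1) by simp
  have aw: "act TT w t = (j, cls S D j (f b t))" using T_act[OF jb(3) t jb(2)] jb(1) by simp
  have dv: "depth TT v = i" "depth TT (act TT v t) = i" using T_depth ia av cl[OF ia(3) t] by auto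
  have dw: "depth TT w = j" "depth TT (act TT w t) = j" using T_depth jb aw cl[OF jb(3) t] by auto
  define P where "P = (\<lambda>n. \<exists>k l. k + l = n \<and> k \<le> depth TT v \<and> l \<le> depth TT w \<and> (par TT ^^ k) v = (par TT ^^ l) w)"
  define P' where "P' = (\<lambda>n. \<exists>k l. k + l = n \<and> k \<le> depth TT (act TT v t) \<and> l \<le> depth TT (act TT w t) \<and>
      (par TT ^^ k) (act TT v t) = (par TT ^^ l) (act TT w t))"
  have PP: "P' n" if Pn: "P n" for n
  proof -
    obtain k l where kl: "k + l = n" "k \<le> i" "l \<le> j" "(par TT ^^ k) v = (par TT ^^ l) w"
      using Pn unfolding P_def dv dw by auto
    have e1: "(par TT ^^ k) v = (i - k, cls S D (i - k) a)" using T_parpow[OF ia(3) ia(2) kl(2)] ia(1) by simp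
    have e2: "(par TT ^^ l) w = (j - l, cls S D (j - l) b)" using T_parpow[OF jb(3) jb(2) kl(3)] jb(1) by simp
    have "(i - k, cls S D (i - k) a) = (j - l, cls S D (j - l) b)" using kl(4)[unfolded e1 e2] .
    then have dd: "i - k = j - l \<and> cls S D (i - k) a = cls S D (j - l) b" by (rule Pair_inject) blast
    have d: "i - k = j - l" "cls S D (i - k) a = cls S D (i - k) b"
      using conjunct1[OF dd] apply simp
      using conjunct1[OF dd] conjunct2[OF dd] by simp
    have dN: "enat (i - k) \<le> NN" using ia(2) by (rule enat_le_sub)
    have "enat (i - k) \<le> D a b" using cls_eq[OF ia(3) jb(3) dN] d(2) by simp
    then have "enat (i - k) \<le> D (f a t) (f b t)" using LF_cong[OF slf ia(3) jb(3) t] by simp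
    then have "cls S D (i - k) (f a t) = cls S D (i - k) (f b t)"
      using cls_eq[OF cl[OF ia(3) t] cl[OF jb(3) t] dN] by simp
    then have "(par TT ^^ k) (act TT v t) = (par TT ^^ l) (act TT w t)"
      using T_parpow[OF cl[OF ia(3) t] ia(2) kl(2)] T_parpow[OF cl[OF jb(3) t] jb(2) kl(3)] av aw d(1) by simp
    then show ?thesis unfolding P'_def using kl dv dw by auto
  qed
  have "P (i + j)"
    unfolding P_def using T_parpow[OF ia(3) ia(2), of i] T_parpow[OF jb(3) jb(2), of j] ia(1) jb(1) dv dw T_rt
    by (intro exI[of _ i] exI[of _ j]) auto
  then have "P (Least P)" by (rule LeastI)
  then have "P' (Least P)" by (rule PP)
  then have "Least P' \<le> Least P" by (rule Least_le)
  then show ?thesis unfolding tdist_def P_def P'_def .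
qed

lemma T_elliptic_action: "elliptic_action S f TT"
  unfolding elliptic_action_def
proof (intro conjI ballI)
  fix v s assume v: "v \<in> Vt TT" and s: "s \<in> S"
  obtain i a where ia: "v = (i, cls S D i a)" "enat i \<le> NN" "a \<in> S" using v T_Vt_iff by auto
  have av: "act TT v s = (i, cls S D i (f a s))" using T_act[OF ia(3) s ia(2)] ia(1) by simp
  show "act TT v s \<in> Vt TT" using av ia(2) cl[OF ia(3) s] T_Vt_iff by auto
  show "depth TT (act TT v s) = depth TT v" using T_depth av ia cl[OF ia(3) s] by simp
  fix t assume t: "t \<in> S"
  have "act TT (act TT v s) t = (i, cls S D i (f (f a s) t))" using T_act[OF cl[OF ia(3) s] t ia(2)] av by simp
  moreover have "act TT v (f s t) = (i, cls S D i (f a (f s t)))" using T_act[OF ia(3) cl[OF s t] ia(2)] ia(1) by simp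
  ultimately show "act TT (act TT v s) t = act TT v (f s t)" using asc[OF ia(3) s t] by simp
next
  fix v w s assume "v \<in> Vt TT" "w \<in> Vt TT" "s \<in> S"
  then show "tdist TT (act TT v s) (act TT w s) \<le> tdist TT v w" by (rule T_tdist)
qed

lemma T_act_ray: "s \<in> S \<Longrightarrow> enat i \<le> NN \<Longrightarrow> act TT (ray TT i) s = (i, cls S D i s)"
  using T_act[OF eS] lu T_simps by simp

lemma T_elliptic: "elliptic_tree S f TT"
  unfolding elliptic_tree_def
proof (intro conjI)
  show "rooted_tree TT" by (rule T_rooted)
  show "uniform_tree TT" by (rule T_uniform)
  show "is_max_ray TT (ray TT) (rlen TT)" by (rule T_ray_max)
  show "elliptic_action S f TT" by (rule T_elliptic_action)
  show "Vt TT = {act TT (ray TT i) s | i s. enat i \<le> rlen TT \<and> s \<in> S}"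
  proof (rule set_eqI)
    fix v
    show "v \<in> Vt TT \<longleftrightarrow> v \<in> {act TT (ray TT i) s | i s. enat i \<le> rlen TT \<and> s \<in> S}"
    proof
      assume "v \<in> Vt TT"
      then obtain i s where isx: "v = (i, cls S D i s)" "enat i \<le> NN" "s \<in> S" using T_Vt_iff by auto
      then have "v = act TT (ray TT i) s" using T_act_ray by simp
      then show "v \<in> {act TT (ray TT i) s | i s. enat i \<le> rlen TT \<and> s \<in> S}" using isx T_simps by auto
    next
      assume "v \<in> {act TT (ray TT i) s | i s. enat i \<le> rlen TT \<and> s \<in> S}"
      then obtain i s where isx: "v = act TT (ray TT i) s" "enat i \<le> NN" "s \<in> S" using T_simps by auto
      then have "v = (i, cls S D i s)" using T_act_ray by simp
      then show "v \<in> Vt TT" using isx T_Vt_iff by auto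
    qed
  qed
qed

lemma T_act_ray_eq: "s \<in> S \<Longrightarrow> s' \<in> S \<Longrightarrow> enat i \<le> NN \<Longrightarrow>
   act TT (ray TT i) s = act TT (ray TT i) s' \<longleftrightarrow> enat i \<le> D s s'"
  using T_act_ray cls_eq by simp

lemma T_faithful: "strongly_faithful S TT"
  unfolding strongly_faithful_def
proof (intro ballI impI)
  fix s s' assume s: "s \<in> S" and s': "s' \<in> S"
    and h: "\<forall>i. enat i \<le> rlen TT \<longrightarrow> act TT (ray TT i) s = act TT (ray TT i) s'"
  have "\<And>i. enat i \<le> NN \<Longrightarrow> enat i \<le> D s s'" using h T_act_ray_eq[OF s s'] T_simps by simp
  then have "D s s' = NN" using enat_all_le DleN[OF s s'] by blast
  then show "s = s'" using LF_strict[OF slf s s' eS] by simp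
qed

lemma T_Dchi: "s \<in> S \<Longrightarrow> s' \<in> S \<Longrightarrow> Dchi TT s s' = D s s'"
proof -
  assume s: "s \<in> S" and s': "s' \<in> S"
  have "{enat i | i. enat i \<le> rlen TT \<and> act TT (ray TT i) s = act TT (ray TT i) s'} = {enat i | i. enat i \<le> D s s'}"
    using T_act_ray_eq[OF s s'] T_simps DleN[OF s s'] order_trans by fastforce
  then show ?thesis unfolding Dchi_def using Sup_enat_le by simp
qed

end


lemma GT_depth_reach:
  assumes "rooted_tree T" "v \<in> Vt T"
  shows "(par T ^^ depth T v) v = rt T"
proof -
  have "\<exists>n. (par T ^^ n) v = rt T" using assms unfolding rooted_tree_def by blast
  then show ?thesis unfolding depth_def by (rule LeastI_ex)
qed

lemma GT_depth_le: "(par T ^^ n) v = rt T \<Longrightarrow> depth T v \<le> n"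
  unfolding depth_def by (rule Least_le)

lemma GT_depth0:
  assumes "rooted_tree T" "v \<in> Vt T" "depth T v = 0"
  shows "v = rt T"
  using GT_depth_reach[OF assms(1,2)] assms(3) by simp

lemma GT_depth_rt: "depth T (rt T) = 0"
  using GT_depth_le[where T=T and n=0 and v="rt T"] by simp

lemma GT_depth_par:
  assumes r: "rooted_tree T" and v: "v \<in> Vt T" and nr: "v \<noteq> rt T"
  shows "depth T v \<noteq> 0 \<and> depth T (par T v) = depth T v - 1"
proof -
  define d where "d = depth T v"
  have d0: "d \<noteq> 0" using GT_depth0[OF r v] nr d_def by blast
  have reach: "(par T ^^ d) v = rt T" using GT_depth_reach[OF r v] d_def by simp
  have "(par T ^^ (d - 1)) (par T v) = rt T"
    using reach d0 by (metis Suc_diff_1 funpow_Suc_right neq0_conv o_apply)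
  then have le: "depth T (par T v) \<le> d - 1" by (rule GT_depth_le)
  have pv: "par T v \<in> Vt T" using r v nr unfolding rooted_tree_def by blast
  have "(par T ^^ Suc (depth T (par T v))) v = rt T"
    using GT_depth_reach[OF r pv] by (simp add: funpow_Suc_right del: funpow.simps)
  then have "depth T v \<le> Suc (depth T (par T v))" by (rule GT_depth_le)
  then have "d \<le> Suc (depth T (par T v))" using d_def by simp
  then show ?thesis using le d0 d_def by simp
qed

lemma GT_ray_pow:
  assumes r: "is_ray T \<beta> l" and ni: "n \<le> i" and il: "enat i \<le> l"
  shows "(par T ^^ n) (\<beta> i) = \<beta> (i - n)"
  using ni
proof (induction n)
  case 0 then show ?case by simp
next
  case (Suc n)
  have IH: "(par T ^^ n) (\<beta> i) = \<beta> (i - n)" using Suc by simp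
  have e: "i - n = Suc (i - Suc n)" using Suc.prems by simp
  have "enat (i - n) \<le> l" by (rule order_trans[OF _ il]) simp
  then have "par T (\<beta> (Suc (i - Suc n))) = \<beta> (i - Suc n)" using r e unfolding is_ray_def by simp
  then show ?case using IH e by simp
qed

lemma GT_ray_depth:
  assumes r: "is_ray T \<beta> l" and il: "enat i \<le> l"
  shows "depth T (\<beta> i) = i"
  unfolding depth_def
proof (rule Least_equality)
  show "(par T ^^ i) (\<beta> i) = rt T" using GT_ray_pow[OF r le_refl il] r unfolding is_ray_def by simp
  fix n assume n: "(par T ^^ n) (\<beta> i) = rt T"
  show "i \<le> n"
  proof (rule ccontr)
    assume "\<not> i \<le> n"
    then have "(par T ^^ n) (\<beta> i) = \<beta> (Suc (i - Suc n))" using GT_ray_pow[OF r _ il, of n] by (simp add: Suc_diff_Suc)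
    moreover have "enat (Suc (i - Suc n)) \<le> l" by (rule order_trans[OF _ il]) (use \<open>\<not> i \<le> n\<close> in simp)
    ultimately show False using n r unfolding is_ray_def by auto
  qed
qed

lemma GT_tdist_le1:
  assumes r: "is_ray T \<beta> l" and il: "enat (Suc i) \<le> l"
  shows "tdist T (\<beta> (Suc i)) (\<beta> i) \<le> 1"
proof -
  have "par T (\<beta> (Suc i)) = \<beta> i" using r il unfolding is_ray_def by simp
  moreover have "1 \<le> depth T (\<beta> (Suc i))" using GT_ray_depth[OF r il] by simp
  ultimately show ?thesis unfolding tdist_def
    by (intro Least_le exI[of _ 1] exI[of _ 0]) simp
qed

context
  fixes S :: "'s set" and f :: "'s \<Rightarrow> 's \<Rightarrow> 's" and T :: "('v, 's) stree"
  assumes et: "elliptic_tree S f T"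
begin

lemma ET_rooted: "rooted_tree T" using et unfolding elliptic_tree_def by simp
lemma ET_ray: "is_ray T (ray T) (rlen T)" using et unfolding elliptic_tree_def is_max_ray_def by simp
lemma ET_ray_Vt: "enat i \<le> rlen T \<Longrightarrow> ray T i \<in> Vt T" using ET_ray unfolding is_ray_def by simp
lemma ET_ea: "elliptic_action S f T" using et unfolding elliptic_tree_def by simp
lemma ET_act_Vt: "v \<in> Vt T \<Longrightarrow> s \<in> S \<Longrightarrow> act T v s \<in> Vt T \<and> depth T (act T v s) = depth T v"
  using ET_ea unfolding elliptic_action_def by blast
lemma ET_act_comp: "v \<in> Vt T \<Longrightarrow> s \<in> S \<Longrightarrow> t \<in> S \<Longrightarrow> act T (act T v s) t = act T v (f s t)"
  using ET_ea unfolding elliptic_action_def by blast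
lemma ET_tdist: "v \<in> Vt T \<Longrightarrow> w \<in> Vt T \<Longrightarrow> s \<in> S \<Longrightarrow> tdist T (act T v s) (act T w s) \<le> tdist T v w"
  using ET_ea unfolding elliptic_action_def by blast
lemma ET_Vt: "Vt T = {act T (ray T i) s | i s. enat i \<le> rlen T \<and> s \<in> S}"
  using et unfolding elliptic_tree_def by simp
lemma ET_ray_depth: "enat i \<le> rlen T \<Longrightarrow> depth T (ray T i) = i" using GT_ray_depth[OF ET_ray] .

lemma ET_act_ray: "enat i \<le> rlen T \<Longrightarrow> s \<in> S \<Longrightarrow> act T (ray T i) s \<in> Vt T \<and> depth T (act T (ray T i) s) = i"
  using ET_act_Vt[OF ET_ray_Vt] ET_ray_depth by simp

lemma ET_act_ray0: "s \<in> S \<Longrightarrow> act T (ray T 0) s = rt T"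
  using ET_act_ray[of 0 s] GT_depth0[OF ET_rooted] by (simp add: zero_enat_def[symmetric])

lemma ET_par_act:
  assumes s: "s \<in> S" and il: "enat (Suc i) \<le> rlen T"
  shows "par T (act T (ray T (Suc i)) s) = act T (ray T i) s"
proof -
  have il': "enat i \<le> rlen T" by (rule order_trans[OF _ il]) simp
  define u where "u = act T (ray T (Suc i)) s"
  define w where "w = act T (ray T i) s"
  have u: "u \<in> Vt T" "depth T u = Suc i" using ET_act_ray[OF il s] u_def by auto
  have w: "w \<in> Vt T" "depth T w = i" using ET_act_ray[OF il' s] w_def by auto
  have "tdist T u w \<le> tdist T (ray T (Suc i)) (ray T i)"
    using ET_tdist[OF ET_ray_Vt[OF il] ET_ray_Vt[OF il'] s] u_def w_def by simp
  also have "\<dots> \<le> 1" by (rule GT_tdist_le1[OF ET_ray il])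
  finally have t1: "tdist T u w \<le> 1" .
  define P where "P = (\<lambda>n. \<exists>k l. k + l = n \<and> k \<le> depth T u \<and> l \<le> depth T w \<and> (par T ^^ k) u = (par T ^^ l) w)"
  have "P (depth T u + depth T w)"
    unfolding P_def using GT_depth_reach[OF ET_rooted u(1)] GT_depth_reach[OF ET_rooted w(1)]
    by (intro exI[of _ "depth T u"] exI[of _ "depth T w"]) simp
  then have PL: "P (Least P)" by (rule LeastI)
  have t2: "Least P \<le> 1" using t1 unfolding tdist_def P_def .
  obtain k l where kl0: "k + l = Least P" "k \<le> Suc i" "l \<le> i" "(par T ^^ k) u = (par T ^^ l) w"
    using PL unfolding P_def u(2) w(2) by blast
  have kl: "k + l \<le> 1" "k \<le> Suc i" "l \<le> i" "(par T ^^ k) u = (par T ^^ l) w"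
    using kl0 t2 by auto
  consider "k = 0 \<and> l = 0" | "k = 0 \<and> l = 1" | "k = 1 \<and> l = 0" using kl(1) by linarith
  then show ?thesis
  proof cases
    case 1 then have "u = w" using kl(4) by simp
    then show ?thesis using u(2) w(2) by simp
  next
    case 2
    then have uw: "u = par T w" using kl(4) by simp
    have "i \<noteq> 0" using 2 kl(3) by simp
    then have "w \<noteq> rt T" using w(2) GT_depth_rt by metis
    then have "depth T (par T w) = i - 1" using GT_depth_par[OF ET_rooted w(1)] w(2) by simp
    then show ?thesis using uw u(2) by simp
  next
    case 3
    then have "par T u = w" using kl(4) by simp
    then show ?thesis using u_def w_def by simp
  qed
qed

lemma ET_down:
  assumes s: "s \<in> S" and s': "s' \<in> S" and il: "enat (j + d) \<le> rlen T"
    and eq: "act T (ray T (j + d)) s = act T (ray T (j + d)) s'"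
  shows "act T (ray T j) s = act T (ray T j) s'"
  using il eq
proof (induction d)
  case 0 then show ?case by simp
next
  case (Suc d)
  have il2: "enat (Suc (j + d)) \<le> rlen T" using Suc.prems by simp
  have "enat (j + d) \<le> rlen T" by (rule order_trans[OF _ il2]) simp
  moreover have "act T (ray T (j + d)) s = act T (ray T (j + d)) s'"
    using ET_par_act[OF s il2] ET_par_act[OF s' il2] Suc.prems(2) by simp
  ultimately show ?case using Suc.IH by simp
qed

end


definition goodS :: "'s set \<Rightarrow> ('s \<Rightarrow> 's \<Rightarrow> 's) \<Rightarrow> ('s \<Rightarrow> 's \<Rightarrow> enat) \<Rightarrow> 's \<Rightarrow> bool" where
  "goodS S f D e \<longleftrightarrow> strict_length_function S f D \<and> e \<in> S \<and> (\<forall>a\<in>S. \<forall>b\<in>S. f a b \<in> S) \<and>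
     (\<forall>a\<in>S. \<forall>b\<in>S. \<forall>c\<in>S. f (f a b) c = f a (f b c)) \<and> (\<forall>a\<in>S. f e a = a \<and> f a e = a)"

definition treeD :: "'s set \<Rightarrow> ('s \<Rightarrow> 's \<Rightarrow> 's) \<Rightarrow> ('s \<Rightarrow> 's \<Rightarrow> enat) \<Rightarrow> ('v, 's) stree \<Rightarrow> bool" where
  "treeD S f D T \<longleftrightarrow> elliptic_tree S f T \<and> (\<forall>s\<in>S. \<forall>s'\<in>S. Dchi T s s' = D s s')"

context
  fixes S :: "'s set" and f :: "'s \<Rightarrow> 's \<Rightarrow> 's" and D :: "'s \<Rightarrow> 's \<Rightarrow> enat" and e :: 's
    and T :: "('v, 's) stree"
  assumes g: "goodS S f D e" and td: "treeD S f D T"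
begin

lemma slf': "strict_length_function S f D" using g unfolding goodS_def by simp
lemma eS': "e \<in> S" using g unfolding goodS_def by simp
lemma cl': "a \<in> S \<Longrightarrow> b \<in> S \<Longrightarrow> f a b \<in> S" using g unfolding goodS_def by simp
lemma ru': "a \<in> S \<Longrightarrow> f a e = a" using g unfolding goodS_def by simp
lemma et': "elliptic_tree S f T" using td unfolding treeD_def by simp
lemma dc': "s \<in> S \<Longrightarrow> s' \<in> S \<Longrightarrow> Dchi T s s' = D s s'" using td unfolding treeD_def by simp

lemma ET_rlen: "rlen T = D e e"
proof -
  have "{enat i | i. enat i \<le> rlen T \<and> act T (ray T i) e = act T (ray T i) e} = {enat i | i. enat i \<le> rlen T}"
    by simp
  then have "Dchi T e e = rlen T" unfolding Dchi_def using Sup_enat_le by simp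
  then show ?thesis using dc'[OF eS' eS'] by simp
qed

lemma ET_E:
  assumes s: "s \<in> S" and s': "s' \<in> S" and il: "enat i \<le> rlen T"
  shows "act T (ray T i) s = act T (ray T i) s' \<longleftrightarrow> enat i \<le> D s s'"
proof
  define A where "A = {enat j | j. enat j \<le> rlen T \<and> act T (ray T j) s = act T (ray T j) s'}"
  have DA: "D s s' = Sup A" using dc'[OF s s'] unfolding Dchi_def A_def by simp
  {
    assume "act T (ray T i) s = act T (ray T i) s'"
    then have "enat i \<in> A" using A_def il by auto
    then show "enat i \<le> D s s'" using DA by (simp add: Sup_upper)
  }
  {
    assume le: "enat i \<le> D s s'"
    show "act T (ray T i) s = act T (ray T i) s'"
    proof (rule ccontr)
      assume ne: "act T (ray T i) s \<noteq> act T (ray T i) s'"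
      have i0: "i \<noteq> 0"
      proof
        assume "i = 0"
        then show False using ne ET_act_ray0[OF et' s] ET_act_ray0[OF et' s'] by simp
      qed
      have "y \<le> enat (i - 1)" if y: "y \<in> A" for y
      proof -
        obtain j where j: "y = enat j" "enat j \<le> rlen T" "act T (ray T j) s = act T (ray T j) s'"
          using y A_def by auto
        have "j < i"
        proof (rule ccontr)
          assume "\<not> j < i"
          then have "j = i + (j - i)" by simp
          then have "act T (ray T (i + (j - i))) s = act T (ray T (i + (j - i))) s'"
            "enat (i + (j - i)) \<le> rlen T" using j by simp_all
          then show False using ET_down[OF et' s s'] ne by blast
        qed
        then show ?thesis using j(1) by simp
      qed
      then have "Sup A \<le> enat (i - 1)" by (rule Sup_least)
      then have "enat i \<le> enat (i - 1)" using le DA by (metis order_trans)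
      then show False using i0 by simp
    qed
  }
qed

lemma ET_unit: "enat i \<le> rlen T \<Longrightarrow> act T (ray T i) e = ray T i"
proof -
  assume il: "enat i \<le> rlen T"
  have "ray T i \<in> Vt T" by (rule ET_ray_Vt[OF et' il])
  then obtain j s0 where js: "ray T i = act T (ray T j) s0" "enat j \<le> rlen T" "s0 \<in> S"
    using ET_Vt[OF et'] by auto
  have "act T (ray T i) e = act T (act T (ray T j) s0) e" by (subst js(1)) (rule refl)
  also have "\<dots> = act T (ray T j) (f s0 e)" by (rule ET_act_comp[OF et' ET_ray_Vt[OF et' js(2)] js(3) eS'])
  also have "\<dots> = act T (ray T j) s0" by (simp only: ru'[OF js(3)])
  also have "\<dots> = ray T i" by (rule js(1)[symmetric])
  finally show ?thesis .
qed

lemma ET_repr: "v \<in> Vt T \<Longrightarrow> \<exists>s. s \<in> S \<and> v = act T (ray T (depth T v)) s \<and> enat (depth T v) \<le> rlen T"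
proof -
  assume "v \<in> Vt T"
  then obtain j s where js: "v = act T (ray T j) s" "enat j \<le> rlen T" "s \<in> S"
    using ET_Vt[OF et'] by auto
  then have "depth T v = j" using ET_act_ray[OF et'] by simp
  then show ?thesis using js by auto
qed

end

lemma tree_iso:
  assumes g: "goodS S f D e" and t1: "treeD S f D (T1 :: ('v, 's) stree)" and t2: "treeD S f D (T2 :: ('w, 's) stree)"
  shows "stree_iso S T1 T2"
proof -
  have e1: "elliptic_tree S f T1" and e2: "elliptic_tree S f T2" using t1 t2 unfolding treeD_def by auto
  have eS: "e \<in> S" using eS'[OF g t1] .
  have rl: "rlen T1 = rlen T2" using ET_rlen[OF g t1] ET_rlen[OF g t2] by simp
  define g' where "g' = (\<lambda>v. act T2 (ray T2 (depth T1 v)) (SOME s. s \<in> S \<and> v = act T1 (ray T1 (depth T1 v)) s))"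
  have G: "g' (act T1 (ray T1 i) s) = act T2 (ray T2 i) s" if s: "s \<in> S" and il: "enat i \<le> rlen T1" for i s
  proof -
    define v where "v = act T1 (ray T1 i) s"
    have dv: "depth T1 v = i" using ET_act_ray[OF e1 il s] v_def by simp
    have ex: "\<exists>s'. s' \<in> S \<and> v = act T1 (ray T1 (depth T1 v)) s'" using s dv v_def by auto
    define s'' where "s'' = (SOME s'. s' \<in> S \<and> v = act T1 (ray T1 (depth T1 v)) s')"
    have s'': "s'' \<in> S" "v = act T1 (ray T1 i) s''" using someI_ex[OF ex] s''_def dv by auto
    have "enat i \<le> D s'' s" using ET_E[OF g t1 s''(1) s il] s''(2) v_def by simp
    then have "act T2 (ray T2 i) s'' = act T2 (ray T2 i) s" using ET_E[OF g t2 s''(1) s] il rl by simp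
    then show ?thesis using g'_def dv s''_def v_def by simp
  qed
  show ?thesis
    unfolding stree_iso_def
  proof (intro exI[of _ g'] conjI ballI allI impI)
    show "bij_betw g' (Vt T1) (Vt T2)"
      unfolding bij_betw_def
    proof
      show "inj_on g' (Vt T1)"
      proof (rule inj_onI)
        fix v w assume v: "v \<in> Vt T1" and w: "w \<in> Vt T1" and eq: "g' v = g' w"
        obtain s where s: "s \<in> S" "v = act T1 (ray T1 (depth T1 v)) s" "enat (depth T1 v) \<le> rlen T1"
          using ET_repr[OF g t1 v] by blast
        obtain t where t: "t \<in> S" "w = act T1 (ray T1 (depth T1 w)) t" "enat (depth T1 w) \<le> rlen T1"
          using ET_repr[OF g t1 w] by blast
        have "act T2 (ray T2 (depth T1 v)) s = act T2 (ray T2 (depth T1 w)) t"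
          using eq G[OF s(1) s(3)] G[OF t(1) t(3)] s(2) t(2) by simp
        moreover have "depth T2 (act T2 (ray T2 (depth T1 v)) s) = depth T1 v"
          using ET_act_ray[OF e2 _ s(1)] s(3) rl by simp
        moreover have "depth T2 (act T2 (ray T2 (depth T1 w)) t) = depth T1 w"
          using ET_act_ray[OF e2 _ t(1)] t(3) rl by simp
        ultimately have dd: "depth T1 v = depth T1 w"
          and eq2: "act T2 (ray T2 (depth T1 v)) s = act T2 (ray T2 (depth T1 v)) t" by simp_all
        have "enat (depth T1 v) \<le> D s t" using ET_E[OF g t2 s(1) t(1)] eq2 s(3) rl by simp
        then have "act T1 (ray T1 (depth T1 v)) s = act T1 (ray T1 (depth T1 v)) t"
          using ET_E[OF g t1 s(1) t(1) s(3)] by simp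
        then show "v = w" using s(2) t(2) dd by simp
      qed
      show "g' ` Vt T1 = Vt T2"
      proof (rule set_eqI)
        fix w
        show "w \<in> g' ` Vt T1 \<longleftrightarrow> w \<in> Vt T2"
        proof
          assume "w \<in> g' ` Vt T1"
          then obtain v where v: "v \<in> Vt T1" "w = g' v" by blast
          obtain s where s: "s \<in> S" "v = act T1 (ray T1 (depth T1 v)) s" "enat (depth T1 v) \<le> rlen T1"
            using ET_repr[OF g t1 v(1)] by blast
          have "w = act T2 (ray T2 (depth T1 v)) s" using v(2) G[OF s(1) s(3)] s(2) by simp
          then show "w \<in> Vt T2" using ET_act_ray[OF e2 _ s(1)] s(3) rl by simp
        next
          assume w: "w \<in> Vt T2"
          obtain s where s: "s \<in> S" "w = act T2 (ray T2 (depth T2 w)) s" "enat (depth T2 w) \<le> rlen T2"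
            using ET_repr[OF g t2 w] by blast
          have "act T1 (ray T1 (depth T2 w)) s \<in> Vt T1" using ET_act_ray[OF e1 _ s(1)] s(3) rl by simp
          moreover have "g' (act T1 (ray T1 (depth T2 w)) s) = w" using G[OF s(1)] s(2,3) rl by simp
          ultimately show "w \<in> g' ` Vt T1" by (metis image_eqI)
        qed
      qed
    qed
  next
    have "rt T1 = act T1 (ray T1 0) e" using ET_act_ray0[OF e1 eS] by simp
    moreover have "rt T2 = act T2 (ray T2 0) e" using ET_act_ray0[OF e2 eS] by simp
    ultimately show "g' (rt T1) = rt T2" using G[OF eS, of 0] by (simp add: zero_enat_def[symmetric])
  next
    show "rlen T1 = rlen T2" by (rule rl)
  next
    fix i assume il: "enat i \<le> rlen T1"
    have "g' (ray T1 i) = g' (act T1 (ray T1 i) e)" using ET_unit[OF g t1 il] by simp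
    also have "\<dots> = act T2 (ray T2 i) e" using G[OF eS il] .
    also have "\<dots> = ray T2 i" using ET_unit[OF g t2] il rl by simp
    finally show "g' (ray T1 i) = ray T2 i" .
  next
    fix v assume v: "v \<in> Vt T1" and nr: "v \<noteq> rt T1"
    obtain s where s: "s \<in> S" "v = act T1 (ray T1 (depth T1 v)) s" "enat (depth T1 v) \<le> rlen T1"
      using ET_repr[OF g t1 v] by blast
    have d0: "depth T1 v \<noteq> 0" using GT_depth_par[OF ET_rooted[OF e1] v nr] by simp
    then obtain j where j: "depth T1 v = Suc j" by (cases "depth T1 v") auto
    have jl: "enat j \<le> rlen T1" by (rule order_trans[OF _ s(3)]) (simp add: j)
    have "par T1 v = act T1 (ray T1 j) s" using ET_par_act[OF e1 s(1)] s(2,3) j by simp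
    then have "g' (par T1 v) = act T2 (ray T2 j) s" using G[OF s(1) jl] by simp
    also have "\<dots> = par T2 (act T2 (ray T2 (Suc j)) s)" using ET_par_act[OF e2 s(1)] s(3) j rl by simp
    also have "act T2 (ray T2 (Suc j)) s = g' v" using G[OF s(1) s(3)] s(2) j by simp
    finally show "g' (par T1 v) = par T2 (g' v)" .
  next
    fix v t assume v: "v \<in> Vt T1" and t: "t \<in> S"
    obtain s where s: "s \<in> S" "v = act T1 (ray T1 (depth T1 v)) s" "enat (depth T1 v) \<le> rlen T1"
      using ET_repr[OF g t1 v] by blast
    have fst: "f s t \<in> S" using cl'[OF g t1 s(1) t] .
    have "act T1 v t = act T1 (ray T1 (depth T1 v)) (f s t)"
      using ET_act_comp[OF e1 ET_ray_Vt[OF e1 s(3)] s(1) t] s(2) by simp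
    then have "g' (act T1 v t) = act T2 (ray T2 (depth T1 v)) (f s t)" using G[OF fst s(3)] by simp
    also have "\<dots> = act T2 (act T2 (ray T2 (depth T1 v)) s) t"
      using ET_act_comp[OF e2 ET_ray_Vt[OF e2] s(1) t] s(3) rl by simp
    also have "act T2 (ray T2 (depth T1 v)) s = g' v" using G[OF s(1) s(3)] s(2) by simp
    finally show "g' (act T1 v t) = act T2 (g' v) t" .
  qed
qed


lemma RhY_rhodes: "x \<in> RhY \<phi> \<Longrightarrow> x \<in> rhodes"
proof (induction rule: RhY.induct)
  case unit then show ?case by (rule rh_unit)
next
  case (gen y)
  have "ltL (Some (\<phi> y)) None" unfolding ltL_def using leL_top leL_None by blast
  then show ?case unfolding rhodes_def by simp
next
  case (mult \<sigma> \<tau>) then show ?case using rh_mult_rhodes by blast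
qed

lemma slf_sub: "S' \<subseteq> S \<Longrightarrow> strict_length_function S f D \<Longrightarrow> strict_length_function S' f D"
  unfolding strict_length_function_def length_function_def by blast

theorem lemma8p7:
  assumes "J_above_finite TYPE('a::semigroup_mult)"
  shows "strict_length_function (rhodes :: 'a option list set) rh_mult Hfun \<and>
    (\<forall>\<phi> :: 'y \<Rightarrow> 'a. Y_semigroup \<phi> \<longrightarrow>
       strict_length_function (RhY \<phi>) rh_mult Hfun \<and>
       (\<exists>T :: (nat \<times> 'a option list set, 'a option list) stree.
          elliptic_tree (RhY \<phi>) rh_mult T \<and> strongly_faithful (RhY \<phi>) T \<and>
          (\<forall>s\<in>RhY \<phi>. \<forall>s'\<in>RhY \<phi>. Dchi T s s' = Hfun s s')) \<and>
       (\<forall>(T1 :: ('v, 'a option list) stree) (T2 :: ('w, 'a option list) stree).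
          elliptic_tree (RhY \<phi>) rh_mult T1 \<and> strongly_faithful (RhY \<phi>) T1 \<and>
          (\<forall>s\<in>RhY \<phi>. \<forall>s'\<in>RhY \<phi>. Dchi T1 s s' = Hfun s s') \<and>
          elliptic_tree (RhY \<phi>) rh_mult T2 \<and> strongly_faithful (RhY \<phi>) T2 \<and>
          (\<forall>s\<in>RhY \<phi>. \<forall>s'\<in>RhY \<phi>. Dchi T2 s s' = Hfun s s') \<longrightarrow>
          stree_iso (RhY \<phi>) T1 T2))"

proof -
  have p1: "strict_length_function (rhodes :: 'a option list set) rh_mult Hfun" by (rule part1[OF assms])
  show ?thesis
  proof (intro conjI allI impI)
    show "strict_length_function (rhodes :: 'a option list set) rh_mult Hfun" by (rule p1)
    fix \<phi> :: "'y \<Rightarrow> 'a"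
    define S where "S = RhY \<phi>"
    have sub: "S \<subseteq> rhodes" using RhY_rhodes S_def by blast
    have slf: "strict_length_function S rh_mult Hfun" by (rule slf_sub[OF sub p1])
    have eS: "[None] \<in> S" unfolding S_def by (rule RhY.unit)
    have cl: "\<And>a b. a \<in> S \<Longrightarrow> b \<in> S \<Longrightarrow> rh_mult a b \<in> S" unfolding S_def by (rule RhY.mult)
    have asc: "\<And>a b c. a \<in> S \<Longrightarrow> b \<in> S \<Longrightarrow> c \<in> S \<Longrightarrow> rh_mult (rh_mult a b) c = rh_mult a (rh_mult b c)"
      using rh_assoc sub by blast
    have lu: "\<And>a. a \<in> S \<Longrightarrow> rh_mult [None] a = a" using rh_left_unit sub by blast
    have ru: "\<And>a. a \<in> S \<Longrightarrow> rh_mult a [None] = a" using rh_right_unit sub by blast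
    have g: "goodS S rh_mult Hfun [None]" unfolding goodS_def using slf eS cl asc lu ru by blast
    show "strict_length_function (RhY \<phi>) rh_mult Hfun" using slf S_def by simp
    show "\<exists>T :: (nat \<times> 'a option list set, 'a option list) stree.
          elliptic_tree (RhY \<phi>) rh_mult T \<and> strongly_faithful (RhY \<phi>) T \<and>
          (\<forall>s\<in>RhY \<phi>. \<forall>s'\<in>RhY \<phi>. Dchi T s s' = Hfun s s')"
    proof (intro exI[of _ "mkT S rh_mult Hfun [None]"] conjI ballI)
      show "elliptic_tree (RhY \<phi>) rh_mult (mkT S rh_mult Hfun [None])"
        using T_elliptic[OF slf eS cl asc lu ru] S_def by simp
      show "strongly_faithful (RhY \<phi>) (mkT S rh_mult Hfun [None])"
        using T_faithful[OF slf eS cl asc lu ru] S_def by simp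
      fix s s' assume "s \<in> RhY \<phi>" "s' \<in> RhY \<phi>"
      then show "Dchi (mkT S rh_mult Hfun [None]) s s' = Hfun s s'"
        using T_Dchi[OF slf eS cl asc lu ru] S_def by simp
    qed
    fix T1 :: "('v, 'a option list) stree" and T2 :: "('w, 'a option list) stree"
    assume h: "elliptic_tree (RhY \<phi>) rh_mult T1 \<and> strongly_faithful (RhY \<phi>) T1 \<and>
          (\<forall>s\<in>RhY \<phi>. \<forall>s'\<in>RhY \<phi>. Dchi T1 s s' = Hfun s s') \<and>
          elliptic_tree (RhY \<phi>) rh_mult T2 \<and> strongly_faithful (RhY \<phi>) T2 \<and>
          (\<forall>s\<in>RhY \<phi>. \<forall>s'\<in>RhY \<phi>. Dchi T2 s s' = Hfun s s')"
    have t1: "treeD S rh_mult Hfun T1" unfolding treeD_def using h S_def by simp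
    have t2: "treeD S rh_mult Hfun T2" unfolding treeD_def using h S_def by simp
    show "stree_iso (RhY \<phi>) T1 T2" using tree_iso[OF g t1 t2] S_def by simp
  qed
qed


end
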